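(* Let $n\ge 6$, $n-1\le m\le 2n-4$, and let $G$ be any connected simple graph with $n$ vertices and $m$ edges. Then $\mathbf{a}_4(G)\ge 0$.
   Context: $\mathbf{a}_4(G)$ is the coefficient of $\lambda^{n-4}$ in $\det(\lambda\mathbf{I}-\mathbf{A}(G))$, where $\mathbf{A}(G)$ is the adjacency matrix; equivalently, the number of 2-matchings of $G$ minus twice the number of 4-cycles of $G$. *)

theory Defs
  imports "Jordan_Normal_Form.Char_Poly"
begin

definition simple_graph :: "nat \<Rightarrow> nat set set \<Rightarrow> bool" where
  "simple_graph n E \<longleftrightarrow> (\<forall>e\<in>E. e \<subseteq> {0..<n} \<and> card e = 2)"

definition adjacent :: "nat set set \<Rightarrow> nat \<Rightarrow> nat \<Rightarrow> bool" where
  "adjacent E u v \<longleftrightarrow> {u, v} \<in> E"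

definition connected_graph :: "nat \<Rightarrow> nat set set \<Rightarrow> bool" where
  "connected_graph n E \<longleftrightarrow> (\<forall>u\<in>{0..<n}. \<forall>v\<in>{0..<n}. (adjacent E)\<^sup>*\<^sup>* u v)"

definition adjacency_matrix :: "nat \<Rightarrow> nat set set \<Rightarrow> int mat" where
  "adjacency_matrix n E = mat n n (\<lambda>(i, j). if adjacent E i j then 1 else 0)"

definition a4 :: "nat \<Rightarrow> nat set set \<Rightarrow> int" where
  "a4 n E = coeff (char_poly (adjacency_matrix n E)) (n - 4)"

end

theory Submission
  imports Defs
begin


definition wt :: "nat set set \<Rightarrow> nat \<Rightarrow> nat \<Rightarrow> int" where
  "wt E i j = (if {i,j} \<in> E then 1 else 0)"

definition dl :: "nat set set \<Rightarrow> nat set \<Rightarrow> int" where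
  "dl E S = (\<Sum>p\<in>{p. p permutes S}. sign p * (\<Prod>i\<in>S. wt E i (p i)))"

lemma wt_sym: "wt E i j = wt E j i"
  by (simp add: wt_def insert_commute)

lemma wt_idem: "wt E i j * wt E i j = wt E i j" "wt E i j * (wt E i j * z) = wt E i j * z"
  by (auto simp: wt_def)

lemma perm_empty_set: "{p. p permutes {}} = {id}" by auto

lemma dl_formula:
  assumes dist: "a \<noteq> b" "a \<noteq> c" "a \<noteq> d" "b \<noteq> c" "b \<noteq> d" "c \<noteq> d"
    and loop: "\<And>i. wt E i i = 0"
  shows "dl E {a,b,c,d} = wt E a b * wt E c d + wt E a c * wt E b d + wt E a d * wt E b c
     - 2 * (wt E a b * wt E b c * wt E c d * wt E a d + wt E a b * wt E b d * wt E c d * wt E a c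
          + wt E a c * wt E b c * wt E b d * wt E a d)"
proof -
  have "dl E {a,b,c,d} = (\<Sum>p\<in>{p. p permutes {a,b,c,d}}. sign p * (wt E a (p a) * wt E b (p b) * wt E c (p c) * wt E d (p d)))"
    unfolding dl_def using dist by (intro sum.cong) (auto simp: mult.assoc)
  also have "\<dots> = wt E a b * wt E c d + wt E a c * wt E b d + wt E a d * wt E b c
     - 2 * (wt E a b * wt E b c * wt E c d * wt E a d + wt E a b * wt E b d * wt E c d * wt E a c
          + wt E a c * wt E b c * wt E b d * wt E a d)"
    using dist
    apply (simp add: sum_over_permutations_insert perm_empty_set sign_compose permutation_compose
       sign_swap_id transpose_apply_other loop permutation_swap_id)
    apply (simp add: wt_sym algebra_simps wt_idem)
    done
  finally show ?thesis .
qed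


definition wfg :: "nat set \<Rightarrow> nat set set \<Rightarrow> bool" where
  "wfg V E \<longleftrightarrow> finite V \<and> (\<forall>e\<in>E. e \<subseteq> V \<and> card e = 2)"

definition clique :: "nat set set \<Rightarrow> nat set \<Rightarrow> bool" where
  "clique E S \<longleftrightarrow> (\<forall>i\<in>S. \<forall>j\<in>S. i \<noteq> j \<longrightarrow> {i,j} \<in> E)"

lemma loopfree: "\<forall>e\<in>E. card e = 2 \<Longrightarrow> wt E i i = 0"
  by (auto simp: wt_def)

lemma card4_obtain:
  assumes "card S = 4"
  obtains a b c d where "S = {a,b,c,d}" "a \<noteq> b" "a \<noteq> c" "a \<noteq> d" "b \<noteq> c" "b \<noteq> d" "c \<noteq> d"
proof -
  have "card S = Suc 3" using assms by simp
  then obtain a S1 where 1: "S = insert a S1" "a \<notin> S1" "card S1 = 3"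
    using card_Suc_eq[of S 3] by auto
  then have "card S1 = Suc 2" by simp
  then obtain b S2 where 2: "S1 = insert b S2" "b \<notin> S2" "card S2 = 2"
    using card_Suc_eq[of S1 2] by auto
  then obtain c d where 3: "S2 = {c,d}" "c \<noteq> d"
    by (auto simp: card_2_iff)
  show ?thesis using that 1 2 3 by auto
qed

lemma dl_local:
  assumes "\<And>i j. i \<in> S \<Longrightarrow> j \<in> S \<Longrightarrow> ({i,j} \<in> E) = ({i,j} \<in> E')"
  shows "dl E S = dl E' S"
  unfolding dl_def
proof (intro sum.cong refl)
  fix p assume "p \<in> {p. p permutes S}"
  then have p: "p permutes S" by simp
  show "sign p * (\<Prod>i\<in>S. wt E i (p i)) = sign p * (\<Prod>i\<in>S. wt E' i (p i))"
    using assms permutes_in_image[OF p] by (auto simp: wt_def intro!: prod.cong)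
qed

lemma dl_cases:
  assumes "card S = 4" "\<forall>e\<in>E. card e = 2"
  shows "dl E S \<ge> -3 \<and> (\<not> clique E S \<longrightarrow> dl E S \<ge> 0)"
proof -
  obtain a b c d where S: "S = {a,b,c,d}" and dist: "a \<noteq> b" "a \<noteq> c" "a \<noteq> d" "b \<noteq> c" "b \<noteq> d" "c \<noteq> d"
    using card4_obtain[OF assms(1)] by metis
  have cl: "clique E {a,b,c,d} \<longleftrightarrow> {a,b} \<in> E \<and> {a,c} \<in> E \<and> {a,d} \<in> E \<and> {b,c} \<in> E \<and> {b,d} \<in> E \<and> {c,d} \<in> E"
    unfolding clique_def using dist by (auto simp: insert_commute)
  show ?thesis
    unfolding S dl_formula[OF dist loopfree[OF assms(2)]] cl
    by (simp add: wt_def)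
qed

lemma dl_pendant:
  assumes "p \<noteq> x" "p \<noteq> y" "p \<noteq> z" "x \<noteq> y" "x \<noteq> z" "y \<noteq> z" "\<forall>e\<in>E. card e = 2"
    and "{p,x} \<in> E" "{y,z} \<in> E" "{p,y} \<notin> E" "{p,z} \<notin> E"
  shows "dl E {p,x,y,z} = 1"
  unfolding dl_formula[OF assms(1-6) loopfree[OF assms(7)]]
  using assms(8-11) by (simp add: wt_def)


definition F :: "nat set \<Rightarrow> nat set set \<Rightarrow> int" where
  "F V E = (\<Sum>S\<in>{S. S \<subseteq> V \<and> card S = 4}. dl E S)"

definition del :: "nat set set \<Rightarrow> nat \<Rightarrow> nat set set" where
  "del E v = {e\<in>E. v \<notin> e}"

definition Sv :: "nat set \<Rightarrow> nat \<Rightarrow> nat set set" where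
  "Sv V v = {S. S \<subseteq> V \<and> card S = 4 \<and> v \<in> S}"

definition Nb :: "nat set set \<Rightarrow> nat \<Rightarrow> nat set" where
  "Nb E v = {u. {v,u} \<in> E}"

definition deg :: "nat set set \<Rightarrow> nat \<Rightarrow> nat" where
  "deg E v = card {e\<in>E. v \<in> e}"

lemma wfg_finE: "wfg V E \<Longrightarrow> finite E"
  unfolding wfg_def by (meson Pow_iff finite_Pow_iff finite_subset subsetI)

lemma wfg_del: "wfg V E \<Longrightarrow> wfg (V - {v}) (del E v)"
  unfolding wfg_def del_def by auto

lemma Nb_sub: "wfg V E \<Longrightarrow> Nb E v \<subseteq> V"
  unfolding wfg_def Nb_def by auto

lemma v_notin_Nb: "wfg V E \<Longrightarrow> v \<notin> Nb E v"
  unfolding wfg_def Nb_def by force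

lemma deg_Nb:
  assumes "wfg V E"
  shows "deg E v = card (Nb E v)"
proof -
  have "{e\<in>E. v \<in> e} = (\<lambda>u. {v,u}) ` Nb E v"
  proof
    show "{e \<in> E. v \<in> e} \<subseteq> (\<lambda>u. {v, u}) ` Nb E v"
    proof
      fix e assume e: "e \<in> {e \<in> E. v \<in> e}"
      then have "card e = 2" using assms unfolding wfg_def by auto
      then obtain x y where "e = {x,y}" "x \<noteq> y" by (auto simp: card_2_iff)
      then show "e \<in> (\<lambda>u. {v, u}) ` Nb E v" using e unfolding Nb_def
        by (auto simp: insert_commute)
    qed
  qed (auto simp: Nb_def)
  moreover have "inj_on (\<lambda>u. {v,u}) (Nb E v)"
    by (auto simp: inj_on_def doubleton_eq_iff)
  ultimately show ?thesis unfolding deg_def by (simp add: card_image)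
qed

lemma F_delete:
  assumes "wfg V E" "v \<in> V"
  shows "F V E = F (V - {v}) (del E v) + (\<Sum>S\<in>Sv V v. dl E S)"
proof -
  have fin: "finite V" using assms unfolding wfg_def by auto
  have eq: "{S. S \<subseteq> V \<and> card S = 4} = {S. S \<subseteq> V - {v} \<and> card S = 4} \<union> Sv V v"
    unfolding Sv_def by auto
  have f1: "finite {S. S \<subseteq> V - {v} \<and> card S = 4}" using fin by auto
  have f2: "finite (Sv V v)" using fin unfolding Sv_def by auto
  have dis: "{S. S \<subseteq> V - {v} \<and> card S = 4} \<inter> Sv V v = {}" unfolding Sv_def by auto
  have "F V E = (\<Sum>S\<in>{S. S \<subseteq> V - {v} \<and> card S = 4}. dl E S) + (\<Sum>S\<in>Sv V v. dl E S)"
    unfolding F_def eq using sum.union_disjoint[OF f1 f2 dis] by simp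
  also have "(\<Sum>S\<in>{S. S \<subseteq> V - {v} \<and> card S = 4}. dl E S) = F (V - {v}) (del E v)"
    unfolding F_def
    by (intro sum.cong refl dl_local) (auto simp: del_def)
  finally show ?thesis .
qed

lemma D_clique:
  assumes "wfg V E"
  shows "(\<Sum>S\<in>Sv V v. dl E S) \<ge> -3 * int (card {S\<in>Sv V v. clique E S})"
proof -
  have fin: "finite (Sv V v)" using assms unfolding wfg_def Sv_def by auto
  have "(\<Sum>S\<in>Sv V v. dl E S) \<ge> (\<Sum>S\<in>Sv V v. if clique E S then -3 else 0)"
    using dl_cases assms unfolding wfg_def Sv_def by (intro sum_mono) auto
  also have "(\<Sum>S\<in>Sv V v. if clique E S then -3 else (0::int)) = -3 * int (card {S\<in>Sv V v. clique E S})"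
    using fin by (simp add: sum.If_cases Int_def)
  finally show ?thesis .
qed

lemma eN_le:
  assumes "wfg V E"
  shows "card {e\<in>E. e \<subseteq> Nb E v} \<le> card E - deg E u"
proof -
  define f where "f e = (if u \<in> e then insert v (e - {u}) else e)" for e
  have finE: "finite E" using wfg_finE[OF assms] .
  have vN: "v \<notin> Nb E v" using v_notin_Nb[OF assms] .
  have img: "f ` {e\<in>E. e \<subseteq> Nb E v} \<subseteq> {e\<in>E. u \<notin> e}"
  proof
    fix x assume "x \<in> f ` {e\<in>E. e \<subseteq> Nb E v}"
    then obtain e where e: "e \<in> E" "e \<subseteq> Nb E v" and x: "x = f e" by auto
    show "x \<in> {e\<in>E. u \<notin> e}"
    proof (cases "u \<in> e")
      case True
      have "card e = 2" using assms e unfolding wfg_def by auto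
      then obtain y where ey: "e = {u,y}" "u \<noteq> y" using True
        by (metis card_2_iff doubleton_eq_iff insertE singletonD)
      have "y \<in> Nb E v" using e ey by auto
      then have "{v,y} \<in> E" unfolding Nb_def by auto
      moreover have "u \<noteq> v" using True e vN by auto
      ultimately show ?thesis using x ey True unfolding f_def by (auto simp: insert_Diff_if)
    next
      case False
      then show ?thesis using x e unfolding f_def by auto
    qed
  qed
  have inj: "inj_on f {e\<in>E. e \<subseteq> Nb E v}"
  proof (rule inj_onI)
    fix e1 e2 assume e1: "e1 \<in> {e\<in>E. e \<subseteq> Nb E v}" and e2: "e2 \<in> {e\<in>E. e \<subseteq> Nb E v}"
      and eq: "f e1 = f e2"
    have c1: "card e1 = 2" "card e2 = 2" using assms e1 e2 unfolding wfg_def by auto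
    have "v \<notin> e1" "v \<notin> e2" using e1 e2 vN by auto
    show "e1 = e2"
    proof (cases "u \<in> e1"; cases "u \<in> e2")
      assume "u \<in> e1" "u \<in> e2"
      then have "insert v (e1 - {u}) = insert v (e2 - {u})" using eq unfolding f_def by simp
      then have "e1 - {u} = e2 - {u}" using \<open>v \<notin> e1\<close> \<open>v \<notin> e2\<close>
        by (metis Diff_iff insert_ident)
      then show ?thesis using \<open>u \<in> e1\<close> \<open>u \<in> e2\<close> by (metis insert_Diff)
    next
      assume "u \<in> e1" "u \<notin> e2"
      then have "v \<in> e2" using eq unfolding f_def by (metis insertI1)
      then show ?thesis using \<open>v \<notin> e2\<close> by simp
    next
      assume "u \<notin> e1" "u \<in> e2"
      then have "v \<in> e1" using eq unfolding f_def by (metis insertI1)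
      then show ?thesis using \<open>v \<notin> e1\<close> by simp
    next
      assume "u \<notin> e1" "u \<notin> e2"
      then show ?thesis using eq unfolding f_def by simp
    qed
  qed
  have "card {e\<in>E. e \<subseteq> Nb E v} \<le> card {e\<in>E. u \<notin> e}"
    using card_inj_on_le[OF inj img] finE by auto
  also have "card {e\<in>E. u \<notin> e} = card E - deg E u"
  proof -
    have "E = {e\<in>E. u \<notin> e} \<union> {e\<in>E. u \<in> e}" by auto
    then have "card E = card {e\<in>E. u \<notin> e} + card {e\<in>E. u \<in> e}"
      using finE by (metis (no_types, lifting) card_Un_disjoint disjoint_iff finite_Un mem_Collect_eq)
    then show ?thesis unfolding deg_def by simp
  qed
  finally show ?thesis .
qed



lemma card_filter_sum: "finite A \<Longrightarrow> card {x\<in>A. P x} = (\<Sum>x\<in>A. if P x then 1 else 0)"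
  by (simp add: sum.inter_filter[symmetric])

lemma double_count:
  assumes "finite A" "finite B"
  shows "(\<Sum>a\<in>A. card {b\<in>B. P a b}) = (\<Sum>b\<in>B. card {a\<in>A. P a b})"
  using assms by (simp add: card_filter_sum sum.swap[of _ A])

lemma clique_count:
  assumes wf: "wfg V E"
  shows "3 * card {S\<in>Sv V v. clique E S} \<le> (card (Nb E v) - 2) * card {e\<in>E. e \<subseteq> Nb E v}"
proof -
  define C where "C = {S\<in>Sv V v. clique E S}"
  define N where "N = Nb E v"
  define EN where "EN = {e\<in>E. e \<subseteq> N}"
  have finV: "finite V" using wf unfolding wfg_def by auto
  have finC: "finite C" unfolding C_def Sv_def using finV by auto
  have finE: "finite E" using wfg_finE[OF wf] .
  have finEN: "finite EN" unfolding EN_def using finE by auto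
  have finN: "finite N" unfolding N_def using Nb_sub[OF wf] finV finite_subset by blast
  have vN: "v \<notin> N" unfolding N_def using v_notin_Nb[OF wf] .
  have c2: "\<And>e. e \<in> E \<Longrightarrow> card e = 2" using wf unfolding wfg_def by auto
  have one: "3 \<le> card {e\<in>EN. e \<subseteq> S - {v}}" if S: "S \<in> C" for S
  proof -
    have S4: "card S = 4" "v \<in> S" "clique E S" using S unfolding C_def Sv_def by auto
    then have "card (S - {v}) = 3" by simp
    then obtain a b c where abc: "S - {v} = {a,b,c}" "a \<noteq> b" "b \<noteq> c" "a \<noteq> c"
      by (auto simp: card_3_iff)
    have inS: "a \<in> S" "b \<in> S" "c \<in> S" "a \<noteq> v" "b \<noteq> v" "c \<noteq> v" using abc by auto
    have edges: "{i,j} \<in> E" if "i \<in> S" "j \<in> S" "i \<noteq> j" for i j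
      using S4(3) that unfolding clique_def by auto
    have inN: "a \<in> N" "b \<in> N" "c \<in> N" unfolding N_def Nb_def using edges inS S4 by auto
    have sub: "{{a,b},{a,c},{b,c}} \<subseteq> {e\<in>EN. e \<subseteq> S - {v}}"
      unfolding EN_def using edges inS inN abc by auto
    have "card {{a,b},{a,c},{b,c}} = 3" using abc by (auto simp: doubleton_eq_iff)
    moreover have "finite {e\<in>EN. e \<subseteq> S - {v}}" using finEN by auto
    ultimately show ?thesis using card_mono[OF _ sub] by auto
  qed
  have two: "card {S\<in>C. e \<subseteq> S - {v}} \<le> card N - 2" if e: "e \<in> EN" for e
  proof -
    have eN: "e \<subseteq> N" "card e = 2" using e c2 unfolding EN_def by auto
    have "{S\<in>C. e \<subseteq> S - {v}} \<subseteq> (\<lambda>z. insert z (insert v e)) ` (N - e)"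
    proof
      fix S assume S: "S \<in> {S\<in>C. e \<subseteq> S - {v}}"
      have S4: "card S = 4" "v \<in> S" "clique E S" "e \<subseteq> S" using S unfolding C_def Sv_def by auto
      have ve: "v \<notin> e" using eN vN by auto
      have c3: "card (insert v e) = 3" using ve eN by (simp add: card_insert_if finite_subset[OF eN(1) finN])
      have sub: "insert v e \<subseteq> S" using S4 by auto
      have "finite S" using S4(1) card.infinite by fastforce
      then have "card (S - insert v e) = 1" using c3 sub S4(1) card_Diff_subset[OF finite_subset[OF sub \<open>finite S\<close>] sub] by simp
      then obtain z where z: "S - insert v e = {z}" by (auto simp: card_1_singleton_iff)
      have Seq: "S = insert z (insert v e)" using z sub by auto
      have "z \<in> S" "z \<noteq> v" "z \<notin> e" using z by auto
      then have "{v,z} \<in> E" using S4(3) S4(2) unfolding clique_def by auto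
      then have "z \<in> N - e" unfolding N_def Nb_def using \<open>z \<notin> e\<close> by auto
      then show "S \<in> (\<lambda>z. insert z (insert v e)) ` (N - e)" using Seq by auto
    qed
    then have "card {S\<in>C. e \<subseteq> S - {v}} \<le> card ((\<lambda>z. insert z (insert v e)) ` (N - e))"
      by (intro card_mono) (use finN in auto)
    also have "\<dots> \<le> card (N - e)" by (rule card_image_le) (use finN in auto)
    also have "\<dots> = card N - 2" using eN finN by (simp add: card_Diff_subset finite_subset)
    finally show ?thesis .
  qed
  have "3 * card C = (\<Sum>S\<in>C. 3)" by simp
  also have "\<dots> \<le> (\<Sum>S\<in>C. card {e\<in>EN. e \<subseteq> S - {v}})" using one by (intro sum_mono) auto
  also have "\<dots> = (\<Sum>e\<in>EN. card {S\<in>C. e \<subseteq> S - {v}})" by (rule double_count[OF finC finEN])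
  also have "\<dots> \<le> (\<Sum>e\<in>EN. card N - 2)" using two by (intro sum_mono) auto
  also have "\<dots> = (card N - 2) * card EN" by simp
  finally show ?thesis unfolding C_def N_def EN_def .
qed



lemma card_notin: "finite E \<Longrightarrow> card {e\<in>E. u \<notin> e} = card E - deg E u"
proof -
  assume finE: "finite E"
  have "E = {e\<in>E. u \<notin> e} \<union> {e\<in>E. u \<in> e}" by auto
  then have "card E = card {e\<in>E. u \<notin> e} + card {e\<in>E. u \<in> e}"
    using finE by (metis (no_types, lifting) card_Un_disjoint disjoint_iff finite_Un mem_Collect_eq)
  then show ?thesis unfolding deg_def by simp
qed

lemma sum_lower:
  fixes f :: "nat set \<Rightarrow> int"
  assumes "finite B" "A \<subseteq> B" "\<And>S. S \<in> A \<Longrightarrow> f S = 1" "\<And>S. S \<in> B - A \<Longrightarrow> S \<noteq> K \<Longrightarrow> f S \<ge> 0"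
    "K \<in> B \<Longrightarrow> K \<notin> A \<Longrightarrow> f K \<ge> -c" "c \<ge> 0"
  shows "(\<Sum>S\<in>B. f S) \<ge> int (card A) - c"
proof -
  have fA: "finite A" using assms(1,2) finite_subset by blast
  have e1: "(\<Sum>S\<in>B. f S) = (\<Sum>S\<in>A. f S) + (\<Sum>S\<in>B - A. f S)"
    using assms(1,2) by (metis add.commute sum.subset_diff)
  have e2: "(\<Sum>S\<in>A. f S) = int (card A)" using assms(3) by simp
  have e3: "(\<Sum>S\<in>B - A. f S) \<ge> -c"
  proof (cases "K \<in> B - A")
    case True
    have "(\<Sum>S\<in>B - A. f S) = f K + (\<Sum>S\<in>B - A - {K}. f S)"
      using True assms(1) by (simp add: sum.remove)
    moreover have "(\<Sum>S\<in>B - A - {K}. f S) \<ge> 0" using assms(4) by (intro sum_nonneg) auto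
    ultimately show ?thesis using assms(5) True by auto
  next
    case False
    then have "(\<Sum>S\<in>B - A. f S) \<ge> 0" using assms(4) by (intro sum_nonneg) auto
    then show ?thesis using assms(6) by linarith
  qed
  show ?thesis using e1 e2 e3 by linarith
qed

lemma D_leaf:
  assumes wf: "wfg V E" and v: "v \<in> V" and Nv: "Nb E v = {a}"
  shows "(\<Sum>S\<in>Sv V v. dl E S) \<ge> int (card E) - int (deg E a)"
proof -
  define A where "A = {f\<in>E. a \<notin> f}"
  define g where "g f = insert v (insert a f)" for f
  have c2: "\<And>e. e \<in> E \<Longrightarrow> card e = 2" and sub: "\<And>e. e \<in> E \<Longrightarrow> e \<subseteq> V" using wf unfolding wfg_def by auto
  have finE: "finite E" using wfg_finE[OF wf] .
  have va: "{v,a} \<in> E" using Nv unfolding Nb_def by auto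
  have av: "a \<noteq> v" using va c2 by force
  have aV: "a \<in> V" using sub[OF va] by auto
  have nvu: "{v,u} \<notin> E" if "u \<noteq> a" for u using Nv that unfolding Nb_def by auto
  have vnot: "v \<notin> f" if "f \<in> A" for f
  proof
    assume "v \<in> f"
    have "f \<in> E" "a \<notin> f" using that unfolding A_def by auto
    then obtain y where "f = {v,y}" using c2 \<open>v \<in> f\<close>
      by (metis card_2_iff doubleton_eq_iff insertE singletonD)
    then show False using nvu[of y] \<open>f \<in> E\<close> \<open>a \<notin> f\<close> by auto
  qed
  have inj: "inj_on g A"
  proof (rule inj_onI)
    fix f1 f2 assume "f1 \<in> A" "f2 \<in> A" "g f1 = g f2"
    moreover have "f1 = g f1 - {v,a}" "f2 = g f2 - {v,a}"
      using vnot \<open>f1 \<in> A\<close> \<open>f2 \<in> A\<close> unfolding g_def A_def by auto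
    ultimately show "f1 = f2" by metis
  qed
  have props: "g f \<in> Sv V v \<and> dl E (g f) = 1" if f: "f \<in> A" for f
  proof -
    have fE: "f \<in> E" "a \<notin> f" using f unfolding A_def by auto
    obtain y z where yz: "f = {y,z}" "y \<noteq> z" using c2[OF fE(1)] by (auto simp: card_2_iff)
    have yzv: "y \<noteq> v" "z \<noteq> v" using vnot[OF f] yz by auto
    have yza: "y \<noteq> a" "z \<noteq> a" using fE yz by auto
    have "dl E {v,a,y,z} = 1"
      by (rule dl_pendant) (use av yzv yza yz c2 va fE nvu in auto)
    moreover have "card {v,a,y,z} = 4" using av yzv yza yz by auto
    moreover have "{v,a,y,z} \<subseteq> V" using v aV sub[OF fE(1)] yz by auto
    ultimately show ?thesis unfolding g_def Sv_def yz by auto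
  qed
  have noclique: "\<not> clique E S" if "S \<in> Sv V v" for S
  proof
    assume cl: "clique E S"
    have S: "card S = 4" "v \<in> S" using that unfolding Sv_def by auto
    have "card (S - {v}) = 3" using S by simp
    then obtain p q r where "S - {v} = {p,q,r}" "p \<noteq> q" by (auto simp: card_3_iff)
    then have "p \<in> S" "q \<in> S" "p \<noteq> v" "q \<noteq> v" by auto
    then have "{v,p} \<in> E" "{v,q} \<in> E" using cl S unfolding clique_def by auto
    then show False using nvu \<open>p \<noteq> q\<close> by (cases "p = a") auto
  qed
  have finSv: "finite (Sv V v)" using wf unfolding wfg_def Sv_def by auto
  have "(\<Sum>S\<in>Sv V v. dl E S) \<ge> int (card (g ` A)) - 0"
  proof (rule sum_lower[where K = "{}"])
    show "finite (Sv V v)" by (rule finSv)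
    show "g ` A \<subseteq> Sv V v" using props by auto
    show "\<And>S. S \<in> g ` A \<Longrightarrow> dl E S = 1" using props by auto
    show "\<And>S. S \<in> Sv V v - g ` A \<Longrightarrow> S \<noteq> {} \<Longrightarrow> 0 \<le> dl E S"
      using dl_cases noclique c2 unfolding Sv_def by blast
    show "{} \<in> Sv V v \<Longrightarrow> {} \<notin> g ` A \<Longrightarrow> - 0 \<le> dl E {}" unfolding Sv_def by auto
  qed simp
  also have "card (g ` A) = card A" using card_image[OF inj] .
  also have "card A = card E - deg E a" unfolding A_def using card_notin[OF finE] .
  finally show ?thesis using deg_def card_mono[OF finE, of "{e\<in>E. a \<in> e}"] by auto
qed

lemma handshake:
  assumes wf: "wfg V E"
  shows "(\<Sum>u\<in>V. deg E u) = 2 * card E"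
proof -
  have finV: "finite V" using wf unfolding wfg_def by auto
  have finE: "finite E" using wfg_finE[OF wf] .
  have "(\<Sum>u\<in>V. deg E u) = (\<Sum>u\<in>V. card {e\<in>E. u \<in> e})" unfolding deg_def ..
  also have "\<dots> = (\<Sum>e\<in>E. card {u\<in>V. u \<in> e})"
    by (rule double_count[OF finV finE])
  also have "\<dots> = (\<Sum>e\<in>E. 2)"
  proof (rule sum.cong[OF refl])
    fix e assume "e \<in> E"
    then have "{u\<in>V. u \<in> e} = e" "card e = 2" using wf unfolding wfg_def by auto
    then show "card {u\<in>V. u \<in> e} = 2" by simp
  qed
  finally show ?thesis by simp
qed

definition Dmax :: "nat set \<Rightarrow> nat set set \<Rightarrow> nat" where
  "Dmax V E = Max (insert 0 (deg E ` V))"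

lemma Dmax_ge: "finite V \<Longrightarrow> u \<in> V \<Longrightarrow> deg E u \<le> Dmax V E"
  unfolding Dmax_def by (simp add: Max_ge_iff)

lemma Dmax_attained: "finite V \<Longrightarrow> V \<noteq> {} \<Longrightarrow> \<exists>u\<in>V. deg E u = Dmax V E"
proof -
  assume fin: "finite V" "V \<noteq> {}"
  have "Dmax V E \<in> insert 0 (deg E ` V)" unfolding Dmax_def using fin by (intro Max_in) auto
  then show ?thesis
  proof
    assume z: "Dmax V E = 0"
    obtain u where "u \<in> V" using fin by auto
    then show ?thesis using Dmax_ge[OF fin(1) \<open>u \<in> V\<close>, of E] z by auto
  qed auto
qed

lemma deg_le_card: "finite E \<Longrightarrow> deg E u \<le> card E"
  unfolding deg_def by (rule card_mono) auto

lemma Dmax_le: "finite V \<Longrightarrow> finite E \<Longrightarrow> Dmax V E \<le> card E"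
  unfolding Dmax_def using deg_le_card by (auto simp: Max_le_iff)



lemma D_three:
  assumes wf: "wfg V E" and v: "v \<in> V" and d3: "card (Nb E v) = 3"
    and mind: "\<And>u. u \<in> V \<Longrightarrow> 3 \<le> card (Nb E u)"
    and mb: "card E + 4 \<le> 2 * card V"
  shows "(\<Sum>S\<in>Sv V v. dl E S) \<ge> 0"
proof -
  have c2: "\<And>e. e \<in> E \<Longrightarrow> card e = 2" and esub: "\<And>e. e \<in> E \<Longrightarrow> e \<subseteq> V" using wf unfolding wfg_def by auto
  have finV: "finite V" using wf unfolding wfg_def by auto
  have finE: "finite E" using wfg_finE[OF wf] .
  obtain x y z where N: "Nb E v = {x,y,z}" and dxyz: "x \<noteq> y" "y \<noteq> z" "x \<noteq> z"
    using d3 by (auto simp: card_3_iff)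
  have vN: "v \<notin> Nb E v" using v_notin_Nb[OF wf] .
  have vxyz: "v \<noteq> x" "v \<noteq> y" "v \<noteq> z" using vN N by auto
  have exyz: "{v,x} \<in> E" "{v,y} \<in> E" "{v,z} \<in> E" using N unfolding Nb_def by auto
  have xyzV: "x \<in> V" "y \<in> V" "z \<in> V" using Nb_sub[OF wf] N by auto
  define K where "K = {v,x,y,z}"
  have K4: "card K = 4" unfolding K_def using vxyz dxyz by auto
  have KV: "K \<subseteq> V" unfolding K_def using v xyzV by auto
  have KSv: "K \<in> Sv V v" unfolding Sv_def K_def using K4 KV K_def by auto
  have finSv: "finite (Sv V v)" using finV unfolding Sv_def by auto
  have cliqK: "S = K" if S: "S \<in> Sv V v" "clique E S" for S
  proof -
    have S4: "card S = 4" "v \<in> S" "S \<subseteq> V" using S unfolding Sv_def by auto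
    have "S - {v} \<subseteq> Nb E v" using S(2) S4 unfolding clique_def Nb_def by auto
    moreover have "card (S - {v}) = card (Nb E v)" using S4 d3 by simp
    moreover have "finite (Nb E v)" using N by simp
    ultimately have "S - {v} = Nb E v" by (simp add: card_subset_eq)
    then show ?thesis unfolding K_def using S4(2) N by auto
  qed
  show ?thesis
  proof (cases "clique E K")
    case False
    have e: "{S\<in>Sv V v. clique E S} = {}" using cliqK False by auto
    have "(\<Sum>S\<in>Sv V v. dl E S) \<ge> -3 * int (card {S\<in>Sv V v. clique E S})" by (rule D_clique[OF wf])
    then show ?thesis unfolding e by simp
  next
    case True
    have Kedges: "{x,y} \<in> E" "{x,z} \<in> E" "{y,z} \<in> E"
      using True dxyz unfolding K_def clique_def by auto
    show ?thesis
    proof (cases "\<exists>w1 w2. {w1,w2} \<in> E \<and> w1 \<notin> K \<and> w2 \<notin> K")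
      case True
      then obtain w1 w2 where w: "{w1,w2} \<in> E" "w1 \<notin> K" "w2 \<notin> K" by blast
      have w12: "w1 \<noteq> w2" using c2[OF w(1)] by (cases "w1 = w2") auto
      have wK: "w1 \<noteq> v" "w1 \<noteq> x" "w1 \<noteq> y" "w1 \<noteq> z" "w2 \<noteq> v" "w2 \<noteq> x" "w2 \<noteq> y" "w2 \<noteq> z"
        using w unfolding K_def by auto
      have wV: "w1 \<in> V" "w2 \<in> V" using esub[OF w(1)] by auto
      have nvw: "{v,w1} \<notin> E" "{v,w2} \<notin> E" using wK N unfolding Nb_def by auto
      define A where "A = {{v,x,w1,w2},{v,y,w1,w2},{v,z,w1,w2}}"
      have cA: "card A = 3"
      proof -
        have "x \<notin> {v,y,w1,w2}" "x \<notin> {v,z,w1,w2}" "y \<notin> {v,z,w1,w2}" using vxyz dxyz wK by auto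
        then have "{v,x,w1,w2} \<noteq> {v,y,w1,w2}" "{v,x,w1,w2} \<noteq> {v,z,w1,w2}" "{v,y,w1,w2} \<noteq> {v,z,w1,w2}" by blast+
        then show ?thesis unfolding A_def by simp
      qed
      have AS: "A \<subseteq> Sv V v" unfolding A_def Sv_def using vxyz dxyz wK w12 v xyzV wV by auto
      have A1: "dl E S = 1" if "S \<in> A" for S
      proof -
        have "dl E {v,u,w1,w2} = 1" if "u \<in> {x,y,z}" for u
          by (rule dl_pendant) (use that vxyz wK w12 c2 exyz w nvw in auto)
        then show ?thesis using \<open>S \<in> A\<close> unfolding A_def by auto
      qed
      have "(\<Sum>S\<in>Sv V v. dl E S) \<ge> int (card A) - 3"
      proof (rule sum_lower[OF finSv AS A1, where K = K])
        show "\<And>S. S \<in> Sv V v - A \<Longrightarrow> S \<noteq> K \<Longrightarrow> 0 \<le> dl E S"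
          using dl_cases cliqK c2 unfolding Sv_def by blast
        show "K \<in> Sv V v \<Longrightarrow> K \<notin> A \<Longrightarrow> - 3 \<le> dl E K"
          using dl_cases K4 c2 by blast
      qed auto
      then show ?thesis using cA by simp
    next
      case False
      define W where "W = V - K"
      have NbW: "Nb E w = {x,y,z}" if w: "w \<in> W" for w
      proof -
        have sub: "Nb E w \<subseteq> {x,y,z}"
        proof
          fix u assume "u \<in> Nb E w"
          then have e: "{w,u} \<in> E" unfolding Nb_def by auto
          have "u \<in> V" using esub[OF e] by auto
          have "u \<noteq> v"
          proof
            assume "u = v"
            then have "w \<in> Nb E v" using e unfolding Nb_def by (auto simp: insert_commute)
            then show False using w N unfolding W_def K_def by auto
          qed
          moreover have "u \<in> K" using False e w unfolding W_def \<open>u \<in> V\<close> by (metis Diff_iff \<open>u \<in> V\<close>)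
          ultimately show "u \<in> {x,y,z}" unfolding K_def by auto
        qed
        have "card (Nb E w) \<ge> 3" using mind w unfolding W_def by auto
        moreover have "card {x,y,z} = 3" using dxyz by simp
        ultimately show ?thesis using card_seteq[of "{x,y,z}" "Nb E w"] sub by simp
      qed
      define B1 where "B1 = {{v,x},{v,y},{v,z},{x,y},{x,z},{y,z}}"
      define B2 where "B2 = (\<lambda>(w,u). {w,u}) ` (W \<times> {x,y,z})"
      have B1E: "B1 \<subseteq> E" unfolding B1_def using exyz Kedges by auto
      have B2E: "B2 \<subseteq> E" unfolding B2_def using NbW unfolding Nb_def by auto
      have cB1: "card B1 = 6" unfolding B1_def using vxyz dxyz by (simp add: doubleton_eq_iff)
      have injB: "inj_on (\<lambda>(w,u). {w,u}) (W \<times> {x,y,z})"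
        unfolding inj_on_def W_def K_def by (auto simp: doubleton_eq_iff)
      have finW: "finite W" unfolding W_def using finV by auto
      have cW: "card W = card V - 4" unfolding W_def using K4 KV finV by (simp add: card_Diff_subset finite_subset)
      have cB2: "card B2 = card W * 3" unfolding B2_def using card_image[OF injB] dxyz finW by (simp add: card_cartesian_product)
      have dis: "B1 \<inter> B2 = {}" unfolding B1_def B2_def W_def K_def by auto
      have "card B1 + card B2 \<le> card E"
        using card_mono[OF finE, of "B1 \<union> B2"] B1E B2E dis card_Un_disjoint[of B1 B2] finE
        by (metis Un_least finite_subset)
      then have "6 + (card V - 4) * 3 \<le> card E" using cB1 cB2 cW by simp
      moreover have "card V \<ge> 4" using K4 KV finV by (metis card_mono)
      ultimately show ?thesis using mb by linarith
    qed
  qed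
qed

lemma deg_del_le:
  assumes wf: "wfg V E" and uv: "u \<noteq> v"
  shows "deg E u \<le> deg (del E v) u + 1"
proof -
  have finE: "finite E" using wfg_finE[OF wf] .
  have "{e\<in>E. u \<in> e} \<subseteq> insert {u,v} {e\<in>del E v. u \<in> e}"
  proof
    fix e assume e: "e \<in> {e\<in>E. u \<in> e}"
    show "e \<in> insert {u,v} {e\<in>del E v. u \<in> e}"
    proof (cases "v \<in> e")
      case True
      have "card e = 2" using wf e unfolding wfg_def by auto
      then have "e = {u,v}" using True e uv by (auto simp: card_2_iff)
      then show ?thesis by simp
    qed (use e in \<open>auto simp: del_def\<close>)
  qed
  then have "card {e\<in>E. u \<in> e} \<le> card (insert {u,v} {e\<in>del E v. u \<in> e})"
    by (rule card_mono[rotated]) (use finE in \<open>auto simp: del_def\<close>)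
  also have "\<dots> \<le> card {e\<in>del E v. u \<in> e} + 1"
    by (simp add: card_insert_le_m1 card_insert_if) 
  finally show ?thesis unfolding deg_def .
qed

lemma deg_del_le2: "deg (del E v) u \<le> deg E u" if "finite E"
  unfolding deg_def del_def using that by (intro card_mono) auto

lemma card_del: "wfg V E \<Longrightarrow> card (del E v) = card E - deg E v"
  unfolding del_def using card_notin wfg_finE by blast

lemma Dmax_del:
  assumes wf: "wfg V E" and v: "v \<in> V" and d1: "deg E v \<ge> 1" and ne: "V - {v} \<noteq> {}"
  shows "Dmax V E \<le> Dmax (V - {v}) (del E v) + deg E v"
proof -
  have finV: "finite V" using wf unfolding wfg_def by auto
  obtain u where u: "u \<in> V" "deg E u = Dmax V E" using Dmax_attained[OF finV] v by blast
  show ?thesis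
  proof (cases "u = v")
    case True then show ?thesis using u by simp
  next
    case False
    have "deg E u \<le> deg (del E v) u + 1" using deg_del_le[OF wf False] .
    also have "deg (del E v) u \<le> Dmax (V - {v}) (del E v)" using Dmax_ge[of "V - {v}" u] finV u False by auto
    finally show ?thesis using u d1 by simp
  qed
qed



lemma dl_pendant2:
  assumes c2: "\<forall>e\<in>E. card e = 2" and e: "e \<in> E" and f: "f \<in> E" and dis: "e \<inter> f = {}"
    and p: "p \<in> e" and np: "\<And>y. y \<in> f \<Longrightarrow> {p,y} \<notin> E"
  shows "dl E (e \<union> f) = 1"
proof -
  obtain a b where ab: "e = {a,b}" "a \<noteq> b" using c2 e by (auto simp: card_2_iff)
  obtain q where eq: "e = {p,q}" "p \<noteq> q"
  proof (cases "p = a")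
    case True then show ?thesis using that ab by auto
  next
    case False then have "p = b" using p ab by auto
    then show ?thesis using that ab by auto
  qed
  obtain y z where fyz: "f = {y,z}" "y \<noteq> z" using c2 f by (auto simp: card_2_iff)
  have "dl E {p,q,y,z} = 1"
    by (rule dl_pendant) (use eq fyz dis c2 e f np in auto)
  moreover have "e \<union> f = {p,q,y,z}" using eq fyz by auto
  ultimately show ?thesis by simp
qed

lemma os_nocross:
  assumes "V1 \<inter> V2 = {x}" "wfg V1 E1" "wfg V2 E2" "p \<in> V1 - {x}" "q \<in> V2 - {x}"
  shows "{p,q} \<notin> E1 \<union> E2"
proof
  assume "{p,q} \<in> E1 \<union> E2"
  then show False
  proof
    assume "{p,q} \<in> E1" then have "q \<in> V1" using assms(2) unfolding wfg_def by auto
    then show False using assms(1,5) by auto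
  next
    assume "{p,q} \<in> E2" then have "p \<in> V2" using assms(3) unfolding wfg_def by auto
    then show False using assms(1,4) by auto
  qed
qed

lemma os_wfg:
  assumes "wfg V1 E1" "wfg V2 E2"
  shows "wfg (V1 \<union> V2) (E1 \<union> E2)"
  using assms unfolding wfg_def by auto

lemma os_dis:
  assumes "V1 \<inter> V2 = {x}" "wfg V1 E1" "wfg V2 E2"
  shows "E1 \<inter> E2 = {}"
proof -
  { fix e assume "e \<in> E1" "e \<in> E2"
    then have "e \<subseteq> V1" "e \<subseteq> V2" "card e = 2" using assms(2,3) unfolding wfg_def by auto
    then have "e \<subseteq> {x}" "card e = 2" using assms(1) by blast+
    then have False using card_mono[of "{x}" e] by simp
  }
  then show ?thesis by auto
qed

lemma os_local:
  assumes "V1 \<inter> V2 = {x}" "wfg V1 E1" "wfg V2 E2" "S \<subseteq> V1"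
  shows "dl (E1 \<union> E2) S = dl E1 S"
proof (rule dl_local)
  fix i j assume ij: "i \<in> S" "j \<in> S"
  show "({i, j} \<in> E1 \<union> E2) = ({i, j} \<in> E1)"
  proof
    assume "{i,j} \<in> E1 \<union> E2"
    moreover have "{i,j} \<notin> E2 - E1"
    proof
      assume "{i,j} \<in> E2 - E1"
      then have "{i,j} \<subseteq> V2" "card {i,j} = 2" using assms unfolding wfg_def by auto
      moreover have "i \<in> V1" "j \<in> V1" using ij assms(4) by auto
      ultimately have "i = x" "j = x" using assms(1) by auto
      then show False using \<open>card {i,j} = 2\<close> by simp
    qed
    ultimately show "{i,j} \<in> E1" by auto
  qed auto
qed

definition Mx :: "nat set \<Rightarrow> nat set \<Rightarrow> nat set set" where
  "Mx V1 V2 = {S. S \<subseteq> V1 \<union> V2 \<and> card S = 4 \<and> \<not> S \<subseteq> V1 \<and> \<not> S \<subseteq> V2}"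

lemma os_F:
  assumes U: "V1 \<inter> V2 = {x}" and W1: "wfg V1 E1" and W2: "wfg V2 E2"
  shows "F (V1 \<union> V2) (E1 \<union> E2) = F V1 E1 + F V2 E2 + (\<Sum>S\<in>Mx V1 V2. dl (E1 \<union> E2) S)"
proof -
  have fin1: "finite V1" and fin2: "finite V2" using W1 W2 unfolding wfg_def by auto
  define A1 where "A1 = {S. S \<subseteq> V1 \<and> card S = 4}"
  define A2 where "A2 = {S. S \<subseteq> V2 \<and> card S = 4}"
  have fA1: "finite A1" unfolding A1_def using fin1 by auto
  have fA2: "finite A2" unfolding A2_def using fin2 by auto
  have fM: "finite (Mx V1 V2)" unfolding Mx_def using fin1 fin2 by auto
  have d12: "A1 \<inter> A2 = {}"
  proof -
    { fix S assume "S \<in> A1" "S \<in> A2"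
      then have "S \<subseteq> {x}" "card S = 4" using U unfolding A1_def A2_def by auto
      then have False using card_mono[of "{x}" S] by simp }
    then show ?thesis by auto
  qed
  have dM: "(A1 \<union> A2) \<inter> Mx V1 V2 = {}" unfolding A1_def A2_def Mx_def by auto
  have eq: "{S. S \<subseteq> V1 \<union> V2 \<and> card S = 4} = (A1 \<union> A2) \<union> Mx V1 V2"
    unfolding A1_def A2_def Mx_def by auto
  have "F (V1 \<union> V2) (E1 \<union> E2) = (\<Sum>S\<in>A1. dl (E1 \<union> E2) S) + (\<Sum>S\<in>A2. dl (E1 \<union> E2) S) + (\<Sum>S\<in>Mx V1 V2. dl (E1 \<union> E2) S)"
    unfolding F_def eq
    by (simp add: sum.union_disjoint[OF _ fM dM] sum.union_disjoint[OF fA1 fA2 d12] fA1 fA2)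
  also have "(\<Sum>S\<in>A1. dl (E1 \<union> E2) S) = F V1 E1"
    unfolding F_def A1_def by (intro sum.cong refl os_local[OF U W1 W2]) auto
  also have "(\<Sum>S\<in>A2. dl (E1 \<union> E2) S) = F V2 E2"
  proof -
    have U': "V2 \<inter> V1 = {x}" using U by auto
    show ?thesis unfolding F_def A2_def
      by (subst Un_commute, intro sum.cong refl os_local[OF U' W2 W1]) auto
  qed
  finally show ?thesis .
qed

lemma os_cross:
  assumes U: "V1 \<inter> V2 = {x}" and W1: "wfg V1 E1" and W2: "wfg V2 E2"
  shows "(\<Sum>S\<in>Mx V1 V2. dl (E1 \<union> E2) S) \<ge> int (card E1 * card E2) - int (deg E1 x * deg E2 x)"
proof -
  define E where "E = E1 \<union> E2"
  have fin1: "finite V1" and fin2: "finite V2" using W1 W2 unfolding wfg_def by auto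
  have fE1: "finite E1" using wfg_finE[OF W1] .
  have fE2: "finite E2" using wfg_finE[OF W2] .
  have c2: "\<forall>e\<in>E. card e = 2" unfolding E_def using W1 W2 unfolding wfg_def by auto
  have s1: "\<And>e. e \<in> E1 \<Longrightarrow> e \<subseteq> V1 \<and> card e = 2" using W1 unfolding wfg_def by auto
  have s2: "\<And>e. e \<in> E2 \<Longrightarrow> e \<subseteq> V2 \<and> card e = 2" using W2 unfolding wfg_def by auto
  have nc: "\<And>p q. p \<in> V1 - {x} \<Longrightarrow> q \<in> V2 - {x} \<Longrightarrow> {p,q} \<notin> E"
    unfolding E_def using os_nocross[OF U W1 W2] by blast
  have ex_other: "\<exists>p\<in>e. p \<noteq> x" if "card e = 2" for e :: "nat set"
  proof -
    obtain a b where "e = {a,b}" "a \<noteq> b" using \<open>card e = 2\<close> by (auto simp: card_2_iff)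
    then show ?thesis by auto
  qed
  define P where "P = {(e1,e2). e1 \<in> E1 \<and> e2 \<in> E2 \<and> e1 \<inter> e2 = {}}"
  define X1 where "X1 = {e\<in>E1. x \<in> e}"
  define X2 where "X2 = {e\<in>E2. x \<in> e}"
  have int_sub: "e1 \<inter> e2 \<subseteq> {x}" if "e1 \<in> E1" "e2 \<in> E2" for e1 e2 using s1 s2 that U by blast
  have PX: "E1 \<times> E2 = P \<union> X1 \<times> X2" "P \<inter> X1 \<times> X2 = {}"
    unfolding P_def X1_def X2_def using int_sub by blast+
  have cP: "card P = card E1 * card E2 - deg E1 x * deg E2 x"
  proof -
    have "card (E1 \<times> E2) = card P + card (X1 \<times> X2)"
      unfolding PX(1) by (rule card_Un_disjoint) (use PX fE1 fE2 in \<open>auto intro: finite_subset[of _ "E1 \<times> E2"]\<close>)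
    moreover have "card (X1 \<times> X2) = deg E1 x * deg E2 x" unfolding X1_def X2_def deg_def by (simp add: card_cartesian_product)
    ultimately show ?thesis by (simp add: card_cartesian_product)
  qed
  define u where "u = (\<lambda>(e1::nat set, e2::nat set). e1 \<union> e2)"
  have recov: "e1 - {x} = (e1 \<union> e2) \<inter> (V1 - {x}) \<and> e2 - {x} = (e1 \<union> e2) \<inter> (V2 - {x})"
    if "(e1,e2) \<in> P" for e1 e2
    using that s1 s2 U unfolding P_def by blast
  have xin: "x \<in> e \<longleftrightarrow> card (e - {x}) = 1" if "card e = 2" for e :: "nat set"
  proof -
    have fe: "finite e" using that card.infinite by fastforce
    show ?thesis using that fe by (auto simp: card_Diff_singleton_if)
  qed
  have inj: "inj_on u P"
  proof (rule inj_onI)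
    fix a b assume a: "a \<in> P" and b: "b \<in> P" and eq: "u a = u b"
    obtain e1 e2 where ae: "a = (e1,e2)" by (cases a)
    obtain f1 f2 where bf: "b = (f1,f2)" by (cases b)
    have c: "card e1 = 2" "card e2 = 2" "card f1 = 2" "card f2 = 2"
      using a b s1 s2 unfolding ae bf P_def by auto
    have un: "e1 \<union> e2 = f1 \<union> f2" using eq unfolding ae bf u_def by simp
    have r1: "e1 - {x} = f1 - {x}" "e2 - {x} = f2 - {x}"
      using recov[of e1 e2] recov[of f1 f2] a b un unfolding ae bf by auto
    have "x \<in> e1 \<longleftrightarrow> x \<in> f1" "x \<in> e2 \<longleftrightarrow> x \<in> f2" using xin c r1 by metis+
    moreover have "\<And>g h. g - {x} = h - {x} \<Longrightarrow> (x \<in> g \<longleftrightarrow> x \<in> h) \<Longrightarrow> g = h" by blast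
    ultimately have "e1 = f1" "e2 = f2" using r1 by blast+
    then show "a = b" unfolding ae bf by simp
  qed
  have props: "u p \<in> Mx V1 V2 \<and> dl E (u p) = 1" if p: "p \<in> P" for p
  proof -
    obtain e1 e2 where pe: "p = (e1,e2)" by (cases p)
    have e: "e1 \<in> E1" "e2 \<in> E2" "e1 \<inter> e2 = {}" using p unfolding pe P_def by auto
    have c: "card e1 = 2" "card e2 = 2" "e1 \<subseteq> V1" "e2 \<subseteq> V2" using s1 s2 e by auto
    obtain q1 where q1: "q1 \<in> e1" "q1 \<noteq> x" using ex_other c by blast
    obtain q2 where q2: "q2 \<in> e2" "q2 \<noteq> x" using ex_other c by blast
    have q1V: "q1 \<in> V1 - {x}" "q1 \<notin> V2" using q1 c U by auto
    have q2V: "q2 \<in> V2 - {x}" "q2 \<notin> V1" using q2 c U by auto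
    have fin: "finite e1" "finite e2" using c card.infinite by fastforce+
    have card4: "card (e1 \<union> e2) = 4" using card_Un_disjoint[OF fin e(3)] c by simp
    have inM: "e1 \<union> e2 \<in> Mx V1 V2" unfolding Mx_def using card4 c q1 q2 q1V q2V by auto
    have "dl E (e1 \<union> e2) = 1"
    proof (cases "x \<in> e2")
      case False
      have "e2 \<subseteq> V2 - {x}" using c False by auto
      then show ?thesis
        by (intro dl_pendant2[OF c2 _ _ e(3) q1(1)]) (use e nc q1V in \<open>auto simp: E_def\<close>)
    next
      case True
      have "x \<notin> e1" using True e(3) by auto
      then have "e1 \<subseteq> V1 - {x}" using c by auto
      then have "dl E (e2 \<union> e1) = 1"
        by (intro dl_pendant2[OF c2 _ _ _ q2(1)]) (use e nc q2V in \<open>auto simp: E_def insert_commute\<close>)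
      then show ?thesis by (simp add: Un_commute)
    qed
    then show ?thesis using inM unfolding pe u_def by simp
  qed
  have noclique: "\<not> clique E S" if SM: "S \<in> Mx V1 V2" for S
  proof
    assume cl: "clique E S"
    obtain q where q: "q \<in> S" "q \<notin> V1" using SM unfolding Mx_def by auto
    obtain p where p: "p \<in> S" "p \<notin> V2" using SM unfolding Mx_def by auto
    have "q \<in> V2 - {x}" "p \<in> V1 - {x}" using p q SM U unfolding Mx_def by auto
    then have "{p,q} \<notin> E" using nc by auto
    moreover have "p \<noteq> q" using p q SM unfolding Mx_def by auto
    ultimately show False using cl p q unfolding clique_def by auto
  qed
  have fM: "finite (Mx V1 V2)" unfolding Mx_def using fin1 fin2 by auto
  have "(\<Sum>S\<in>Mx V1 V2. dl E S) \<ge> int (card (u ` P)) - 0"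
  proof (rule sum_lower[where K = "{}"])
    show "finite (Mx V1 V2)" by (rule fM)
    show "u ` P \<subseteq> Mx V1 V2" using props by auto
    show "\<And>S. S \<in> u ` P \<Longrightarrow> dl E S = 1" using props by auto
    show "\<And>S. S \<in> Mx V1 V2 - u ` P \<Longrightarrow> S \<noteq> {} \<Longrightarrow> 0 \<le> dl E S"
      using dl_cases noclique c2 unfolding Mx_def by blast
    show "{} \<in> Mx V1 V2 \<Longrightarrow> {} \<notin> u ` P \<Longrightarrow> - 0 \<le> dl E {}" unfolding Mx_def by auto
  qed simp
  also have "card (u ` P) = card P" using card_image[OF inj] .
  finally have "(\<Sum>S\<in>Mx V1 V2. dl E S) \<ge> int (card E1 * card E2 - deg E1 x * deg E2 x)" using cP by simp
  then show ?thesis unfolding E_def by linarith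
qed

lemma os_deg:
  assumes U: "V1 \<inter> V2 = {x}" and W1: "wfg V1 E1" and W2: "wfg V2 E2"
  shows "deg (E1 \<union> E2) u = deg E1 u + deg E2 u"
proof -
  have "{e\<in>E1 \<union> E2. u \<in> e} = {e\<in>E1. u \<in> e} \<union> {e\<in>E2. u \<in> e}" by auto
  moreover have "{e\<in>E1. u \<in> e} \<inter> {e\<in>E2. u \<in> e} = {}" using os_dis[OF U W1 W2] by auto
  moreover have "finite {e\<in>E1. u \<in> e}" "finite {e\<in>E2. u \<in> e}" using wfg_finE[OF W1] wfg_finE[OF W2] by auto
  ultimately show ?thesis unfolding deg_def by (simp add: card_Un_disjoint)
qed

lemma os_card:
  assumes U: "V1 \<inter> V2 = {x}" and W1: "wfg V1 E1" and W2: "wfg V2 E2"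
  shows "card (E1 \<union> E2) = card E1 + card E2" "card (V1 \<union> V2) + 1 = card V1 + card V2"
proof -
  show "card (E1 \<union> E2) = card E1 + card E2"
    using os_dis[OF U W1 W2] wfg_finE[OF W1] wfg_finE[OF W2] by (simp add: card_Un_disjoint)
  have "finite V1" "finite V2" using W1 W2 unfolding wfg_def by auto
  then show "card (V1 \<union> V2) + 1 = card V1 + card V2" using card_Un_Int[of V1 V2] U by simp
qed

lemma deg_outside: "wfg V E \<Longrightarrow> u \<notin> V \<Longrightarrow> deg E u = 0"
proof -
  assume "wfg V E" "u \<notin> V"
  then have e: "{e\<in>E. u \<in> e} = {}" unfolding wfg_def by auto
  show ?thesis unfolding deg_def e by simp
qed



definition conn :: "nat set \<Rightarrow> nat set set \<Rightarrow> bool" where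
  "conn V E \<longleftrightarrow> (\<forall>u\<in>V. \<forall>w\<in>V. (adjacent E)\<^sup>*\<^sup>* u w)"

lemma adj_sym: "adjacent E u w = adjacent E w u"
  unfolding adjacent_def by (simp add: insert_commute)

lemma rt_sym: "(adjacent E)\<^sup>*\<^sup>* a b \<Longrightarrow> (adjacent E)\<^sup>*\<^sup>* b a"
proof (induction rule: rtranclp.induct)
  case (rtrancl_refl a) then show ?case by simp
next
  case (rtrancl_into_rtrancl a b c)
  have "adjacent E c b" using rtrancl_into_rtrancl(2) adj_sym by metis
  then show ?case using rtrancl_into_rtrancl(3) by (rule converse_rtranclp_into_rtranclp)
qed

lemma conn_from_root:
  assumes "r \<in> V" "\<And>u. u \<in> V \<Longrightarrow> (adjacent E)\<^sup>*\<^sup>* r u"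
  shows "conn V E"
  unfolding conn_def
proof (intro ballI)
  fix u w assume "u \<in> V" "w \<in> V"
  then have "(adjacent E)\<^sup>*\<^sup>* u r" "(adjacent E)\<^sup>*\<^sup>* r w" using assms rt_sym by blast+
  then show "(adjacent E)\<^sup>*\<^sup>* u w" by (rule rtranclp_trans)
qed

lemma rt_closed:
  assumes "(adjacent E)\<^sup>*\<^sup>* a b" "a \<in> C" "\<And>y z. y \<in> C \<Longrightarrow> adjacent E y z \<Longrightarrow> z \<in> C"
  shows "b \<in> C"
  using assms by (induction rule: rtranclp_induct) auto

lemma split_cut:
  assumes wf: "wfg V E" and cn: "conn V E" and v: "v \<in> V" and nc: "\<not> conn (V - {v}) (del E v)"
  obtains V1 V2 where "V1 \<union> V2 = V" "V1 \<inter> V2 = {v}" "card V1 < card V" "card V2 < card V"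
        "wfg V1 {e\<in>E. e \<subseteq> V1}" "wfg V2 {e\<in>E. e \<subseteq> V2}" "E = {e\<in>E. e \<subseteq> V1} \<union> {e\<in>E. e \<subseteq> V2}"
        "conn V1 {e\<in>E. e \<subseteq> V1}" "conn V2 {e\<in>E. e \<subseteq> V2}"
proof -
  define E' where "E' = del E v"
  have finV: "finite V" using wf unfolding wfg_def by auto
  have esub: "\<And>e. e \<in> E \<Longrightarrow> e \<subseteq> V" and c2: "\<And>e. e \<in> E \<Longrightarrow> card e = 2" using wf unfolding wfg_def by auto
  obtain a b where ab: "a \<in> V - {v}" "b \<in> V - {v}" "\<not> (adjacent E')\<^sup>*\<^sup>* a b"
    using nc unfolding conn_def E'_def by auto
  define C where "C = {u\<in>V - {v}. (adjacent E')\<^sup>*\<^sup>* a u}"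
  define V1 where "V1 = insert v C"
  define V2 where "V2 = V - C"
  define E1 where "E1 = {e\<in>E. e \<subseteq> V1}"
  define E2 where "E2 = {e\<in>E. e \<subseteq> V2}"
  have aC: "a \<in> C" unfolding C_def using ab by auto
  have bC: "b \<notin> C" unfolding C_def using ab by auto
  have vC: "v \<notin> C" unfolding C_def by auto
  have CV: "C \<subseteq> V" unfolding C_def by auto
  have closure: "z \<in> C" if "y \<in> C" "{y,z} \<in> E" "z \<noteq> v" for y z
  proof -
    have "z \<in> V" using esub[OF that(2)] by auto
    moreover have "y \<noteq> v" using that vC by auto
    then have "adjacent E' y z" using that unfolding adjacent_def E'_def del_def by auto
    then have "(adjacent E')\<^sup>*\<^sup>* a z" using that(1) unfolding C_def by auto
    ultimately show ?thesis unfolding C_def using that by auto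
  qed
  have EU: "E = E1 \<union> E2"
  proof
    show "E \<subseteq> E1 \<union> E2"
    proof
      fix e assume e: "e \<in> E"
      obtain p q where pq: "e = {p,q}" "p \<noteq> q" using c2[OF e] by (auto simp: card_2_iff)
      have pqV: "p \<in> V" "q \<in> V" using esub[OF e] pq by auto
      show "e \<in> E1 \<union> E2"
      proof (cases "e \<subseteq> V1")
        case True then show ?thesis unfolding E1_def using e by auto
      next
        case False
        then have "p \<notin> V1 \<or> q \<notin> V1" using pq by auto
        then have "p \<notin> C \<and> q \<notin> C"
        proof
          assume p1: "p \<notin> V1"
          then have "p \<noteq> v" "p \<notin> C" unfolding V1_def by auto
          moreover have "q \<notin> C"
          proof
            assume "q \<in> C"
            then have "p \<in> C" using closure[of q p] e pq \<open>p \<noteq> v\<close> by (auto simp: insert_commute)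
            then show False using \<open>p \<notin> C\<close> by simp
          qed
          ultimately show ?thesis by simp
        next
          assume q1: "q \<notin> V1"
          then have "q \<noteq> v" "q \<notin> C" unfolding V1_def by auto
          moreover have "p \<notin> C"
          proof
            assume "p \<in> C"
            then have "q \<in> C" using closure[of p q] e pq \<open>q \<noteq> v\<close> by auto
            then show False using \<open>q \<notin> C\<close> by simp
          qed
          ultimately show ?thesis by simp
        qed
        then have "e \<subseteq> V2" unfolding V2_def using pq pqV by auto
        then show ?thesis unfolding E2_def using e by auto
      qed
    qed
  qed (auto simp: E1_def E2_def)
  have U: "V1 \<union> V2 = V" "V1 \<inter> V2 = {v}" unfolding V1_def V2_def using CV v vC by auto
  have c1: "card V1 < card V"
  proof -
    have "V1 \<subseteq> V" "b \<in> V - V1" unfolding V1_def using CV v ab bC by auto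
    then have "V1 \<subset> V" by blast
    then show ?thesis using finV by (simp add: psubset_card_mono)
  qed
  have c2': "card V2 < card V"
  proof -
    have "V2 \<subseteq> V" "a \<in> V - V2" unfolding V2_def using aC ab by auto
    then have "V2 \<subset> V" by blast
    then show ?thesis using finV by (simp add: psubset_card_mono)
  qed
  have w1: "wfg V1 E1" "wfg V2 E2" unfolding wfg_def E1_def E2_def V1_def V2_def
    using finV CV c2 by (auto intro: finite_subset)
  have reach1: "(adjacent E1)\<^sup>*\<^sup>* a u \<and> u \<in> C" if "(adjacent E')\<^sup>*\<^sup>* a u" for u
    using that
  proof (induction rule: rtranclp_induct)
    case base then show ?case using aC by simp
  next
    case (step y z)
    have yC: "y \<in> C" using step.IH by simp
    have e: "{y,z} \<in> E" "v \<notin> {y,z}" using step.hyps(2) unfolding adjacent_def E'_def del_def by auto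
    have zC: "z \<in> C" using closure[OF yC e(1)] e(2) by auto
    have "adjacent E1 y z" using e yC zC unfolding adjacent_def E1_def V1_def by auto
    then show ?case using step.IH zC by auto
  qed
  have "\<exists>c\<in>C. {c,v} \<in> E"
  proof (rule ccontr)
    assume "\<not> (\<exists>c\<in>C. {c,v} \<in> E)"
    then have cl: "z \<in> C" if "y \<in> C" "adjacent E y z" for y z
      using closure[of y z] that unfolding adjacent_def by (cases "z = v") auto
    have "(adjacent E)\<^sup>*\<^sup>* a b" using cn ab unfolding conn_def by auto
    then have "b \<in> C" using rt_closed[of E a b C] aC cl by blast
    then show False using bC by simp
  qed
  then obtain c where c: "c \<in> C" "{c,v} \<in> E" by blast
  have con1: "conn V1 E1"
  proof (rule conn_from_root[of a])
    show "a \<in> V1" using aC unfolding V1_def by simp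
    fix u assume uV1: "u \<in> V1"
    show "(adjacent E1)\<^sup>*\<^sup>* a u"
    proof (cases "u = v")
      case True
      have "(adjacent E1)\<^sup>*\<^sup>* a c" using reach1 c(1) unfolding C_def by auto
      moreover have "adjacent E1 c v" using c unfolding adjacent_def E1_def V1_def using c(1) by auto
      ultimately show ?thesis using True by auto
    next
      case False
      then have "u \<in> C" using uV1 unfolding V1_def by auto
      then show ?thesis using reach1 unfolding C_def by auto
    qed
  qed
  have reach2: "y \<in> V2 \<longrightarrow> (adjacent E2)\<^sup>*\<^sup>* y v" if "(adjacent E)\<^sup>*\<^sup>* y v" for y
    using that
  proof (induction rule: converse_rtranclp_induct)
    case base then show ?case by simp
  next
    case (step y z)
    show ?case
    proof
      assume yV2: "y \<in> V2"
      show "(adjacent E2)\<^sup>*\<^sup>* y v"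
      proof (cases "y = v")
        case True then show ?thesis by simp
      next
        case False
        have e: "{y,z} \<in> E" using step.hyps(1) unfolding adjacent_def by auto
        have yC: "y \<notin> C" using yV2 unfolding V2_def by auto
        have zC: "z \<notin> C"
        proof
          assume "z \<in> C"
          then have "y \<in> C" using closure[of z y] e False by (auto simp: insert_commute)
          then show False using yC by simp
        qed
        have zV2: "z \<in> V2" using zC esub[OF e] unfolding V2_def by auto
        have "adjacent E2 y z" using e yV2 zV2 unfolding adjacent_def E2_def by auto
        moreover have "(adjacent E2)\<^sup>*\<^sup>* z v" using step.IH zV2 by simp
        ultimately show ?thesis by (rule converse_rtranclp_into_rtranclp)
      qed
    qed
  qed
  have con2: "conn V2 E2"
  proof (rule conn_from_root[of v])
    show "v \<in> V2" unfolding V2_def using v vC by simp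
    fix u assume u: "u \<in> V2"
    have "(adjacent E)\<^sup>*\<^sup>* u v" using cn u v unfolding conn_def V2_def by auto
    then show "(adjacent E2)\<^sup>*\<^sup>* v u" using reach2 u rt_sym by blast
  qed
  show thesis
    by (rule that[OF U(1) U(2) c1 c2' w1(1)[unfolded E1_def] w1(2)[unfolded E2_def]
          EU[unfolded E1_def E2_def] con1[unfolded E1_def] con2[unfolded E2_def]])
qed



lemma arith_leaf:
  fixes F' D K K' ex :: int
  assumes "F' \<ge> - (max 0 (ex + 1) * K')" "0 \<le> K'" "K' \<le> K" "D \<ge> K"
  shows "F' + D \<ge> - (max 0 ex * K)"
proof (cases "ex \<ge> 0")
  case True
  have "(ex + 1) * K' \<le> (ex + 1) * K" using assms(3) True by (intro mult_left_mono) auto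
  then show ?thesis using assms(1,4) True by (simp add: algebra_simps max_def)
next
  case False
  then have "max 0 (ex + 1) = 0" by simp
  then show ?thesis using assms False by (simp add: max_def)
qed

lemma arith_gen:
  fixes F' D K K' ex d :: int
  assumes "F' \<ge> - (max 0 (ex - d + 2) * K')" "0 \<le> K'" "K' \<le> K" "D \<ge> - ((d - 2) * K)" "ex \<ge> d - 2" "d \<ge> 2"
  shows "F' + D \<ge> - (max 0 ex * K)"
proof -
  have "(ex - d + 2) * K' \<le> (ex - d + 2) * K" using assms(3,5) by (intro mult_left_mono) auto
  then show ?thesis using assms by (simp add: algebra_simps max_def)
qed

lemma arith_small:
  fixes F' D K K' ex ex' :: int
  assumes "F' \<ge> - (max 0 ex' * K')" "ex' \<le> 0" "D \<ge> 0" "K \<ge> 0"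
  shows "F' + D \<ge> - (max 0 ex * K)"
proof -
  have "max 0 ex * K \<ge> 0" using assms(4) by simp
  moreover have "max 0 ex' = 0" using assms(2) by simp
  then have "F' \<ge> 0" using assms(1) by simp
  ultimately show ?thesis using assms(3) by linarith
qed

lemma arith_os:
  fixes F1 F2 X m1 m2 d1 d2 D1 D2 K ex1 ex2 :: int
  assumes F1: "F1 \<ge> - (max 0 ex1 * (m1 - D1))" and F2: "F2 \<ge> - (max 0 ex2 * (m2 - D2))"
    and X: "X \<ge> m1 * m2 - d1 * d2"
    and d1: "1 \<le> d1" "d1 \<le> D1" "D1 \<le> m1" and d2: "1 \<le> d2" "d2 \<le> D2" "D2 \<le> m2"
    and K: "K \<ge> (m1 - D1) + (m2 - D2)"
    and e1: "m1 + ex1 \<ge> 2" and e2: "m2 + ex2 \<ge> 2"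
  shows "F1 + F2 + X \<ge> - (max 0 (ex1 + ex2 - 2) * K)"
proof -
  define K1 where "K1 = m1 - D1"
  define K2 where "K2 = m2 - D2"
  define a where "a = m1 - d1"
  define b where "b = m2 - d2"
  have K1: "0 \<le> K1" "K1 \<le> a" unfolding K1_def a_def using d1 by auto
  have K2: "0 \<le> K2" "K2 \<le> b" unfolding K2_def b_def using d2 by auto
  have Xa: "X \<ge> a * m2 + d1 * b" using X unfolding a_def b_def by (simp add: algebra_simps)
  have Xb: "X \<ge> b * m1 + d2 * a" using X unfolding a_def b_def by (simp add: algebra_simps)
  have pos: "a \<ge> 0" "b \<ge> 0" "m1 \<ge> 1" "m2 \<ge> 1" using d1 d2 unfolding a_def b_def by auto
  have Kge: "K \<ge> K1 + K2" using K unfolding K1_def K2_def by simp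
  have X0: "X \<ge> 0"
  proof -
    have "a * m2 \<ge> 0" "d1 * b \<ge> 0" using pos d1 by auto
    then show ?thesis using Xa by linarith
  qed
  show ?thesis
  proof (cases "ex1 > 0"; cases "ex2 > 0")
    assume c: "\<not> ex1 > 0" "\<not> ex2 > 0"
    have "max 0 ex1 = 0" "max 0 ex2 = 0" using c by auto
    then have "F1 \<ge> 0" "F2 \<ge> 0" using F1 F2 by auto
    moreover have "max 0 (ex1 + ex2 - 2) * K = 0" using c by (simp add: max_def)
    ultimately show ?thesis using X0 by linarith
  next
    assume c: "ex1 > 0" "\<not> ex2 > 0"
    have F1': "F1 \<ge> - (ex1 * K1)"
    proof -
      have "max 0 ex1 = ex1" using c by auto
      then show ?thesis using F1 unfolding K1_def by simp
    qed
    have F2': "F2 \<ge> 0"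
    proof -
      have "max 0 ex2 = 0" using c by auto
      then show ?thesis using F2 by simp
    qed
    have m2K: "X \<ge> m2 * K1"
    proof -
      have "m2 * K1 \<le> m2 * a" using K1 pos by (intro mult_left_mono) auto
      then show ?thesis using Xa pos d1 K1 by (smt (verit) mult.commute mult_nonneg_nonneg)
    qed
    show ?thesis
    proof (cases "ex1 + ex2 - 2 \<le> 0")
      case True
      have "ex1 * K1 \<le> m2 * K1" using True e2 K1 by (intro mult_right_mono) auto
      then show ?thesis using F1' F2' m2K True by (simp add: max_def)
    next
      case False
      have "(ex1 + ex2 - 2) * K1 \<le> (ex1 + ex2 - 2) * K" using False Kge K2 by (intro mult_left_mono) auto
      moreover have "0 \<le> K1 * (m2 + ex2 - 2)" using K1 e2 by auto
      ultimately show ?thesis using F1' F2' m2K False by (simp add: max_def algebra_simps)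
    qed
  next
    assume c: "\<not> ex1 > 0" "ex2 > 0"
    have F2': "F2 \<ge> - (ex2 * K2)"
    proof -
      have "max 0 ex2 = ex2" using c by auto
      then show ?thesis using F2 unfolding K2_def by simp
    qed
    have F1': "F1 \<ge> 0"
    proof -
      have "max 0 ex1 = 0" using c by auto
      then show ?thesis using F1 by simp
    qed
    have m1K: "X \<ge> m1 * K2"
    proof -
      have "m1 * K2 \<le> m1 * b" using K2 pos by (intro mult_left_mono) auto
      then show ?thesis using Xb pos d2 K2 by (smt (verit) mult.commute mult_nonneg_nonneg)
    qed
    show ?thesis
    proof (cases "ex1 + ex2 - 2 \<le> 0")
      case True
      have "ex2 * K2 \<le> m1 * K2" using True e1 K2 by (intro mult_right_mono) auto
      then show ?thesis using F1' F2' m1K True by (simp add: max_def)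
    next
      case False
      have "(ex1 + ex2 - 2) * K2 \<le> (ex1 + ex2 - 2) * K" using False Kge K1 by (intro mult_left_mono) auto
      moreover have "0 \<le> K2 * (m1 + ex1 - 2)" using K2 e1 by auto
      ultimately show ?thesis using F1' F2' m1K False by (simp add: max_def algebra_simps)
    qed
  next
    assume c: "ex1 > 0" "ex2 > 0"
    have F1': "F1 \<ge> - (ex1 * K1)"
    proof -
      have "max 0 ex1 = ex1" using c by auto
      then show ?thesis using F1 unfolding K1_def by simp
    qed
    have F2': "F2 \<ge> - (ex2 * K2)"
    proof -
      have "max 0 ex2 = ex2" using c by auto
      then show ?thesis using F2 unfolding K2_def by simp
    qed
    have ex0: "ex1 + ex2 - 2 \<ge> 0" using c by auto
    have "(ex1 + ex2 - 2) * (K1 + K2) \<le> (ex1 + ex2 - 2) * K" using ex0 Kge by (intro mult_left_mono) auto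
    moreover have "X \<ge> K1 + K2"
    proof -
      have "a * m2 \<ge> a" using pos by (simp add: mult_le_cancel_left1)
      moreover have "d1 * b \<ge> b" using pos d1 by (simp add: mult_le_cancel_right1)
      ultimately show ?thesis using Xa K1 K2 by linarith
    qed
    moreover have "(2 - ex2) * K1 \<le> K1" using mult_right_mono[of "2 - ex2" 1 K1] c K1 by simp
    moreover have "(2 - ex1) * K2 \<le> K2" using mult_right_mono[of "2 - ex1" 1 K2] c K2 by simp
    ultimately show ?thesis using F1' F2' ex0 by (simp add: max_def algebra_simps)
  qed
qed


definition Psi :: "nat set \<Rightarrow> nat set set \<Rightarrow> int" where
  "Psi V E = max 0 (int (card E) - 2 * int (card V) + 4) * (int (card E) - int (Dmax V E))"

lemma deg_pos:
  assumes wf: "wfg V E" and cn: "conn V E" and v: "v \<in> V" and w: "w \<in> V" "w \<noteq> v"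
  shows "deg E v \<ge> 1"
proof -
  have "(adjacent E)\<^sup>*\<^sup>* v w" using cn v w unfolding conn_def by auto
  then obtain y where "adjacent E v y"
    using w(2) by (cases rule: converse_rtranclpE) auto
  then have "{v,y} \<in> {e\<in>E. v \<in> e}" unfolding adjacent_def by auto
  then have ne: "{e\<in>E. v \<in> e} \<noteq> {}" by auto
  moreover have "finite {e\<in>E. v \<in> e}" using wfg_finE[OF wf] by auto
  ultimately have "card {e\<in>E. v \<in> e} > 0" by (simp add: card_gt_0_iff)
  then show ?thesis unfolding deg_def by simp
qed

theorem main:
  assumes "wfg V E" "conn V E"
  shows "- Psi V E \<le> F V E \<and> card V \<le> card E + 1"
  using assms
proof (induction "card V" arbitrary: V E rule: less_induct)
  case less
  have wf: "wfg V E" and cn: "conn V E" by fact+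
  have finV: "finite V" using wf unfolding wfg_def by auto
  have finE: "finite E" using wfg_finE[OF wf] .
  have c2: "\<forall>e\<in>E. card e = 2" using wf unfolding wfg_def by auto
  have DmE: "Dmax V E \<le> card E" using Dmax_le[OF finV finE] .
  have Psi0: "Psi V E \<ge> 0" unfolding Psi_def using DmE by auto
  show ?case
  proof (cases "card V \<le> 1")
    case True
    have e0: "{S. S \<subseteq> V \<and> card S = 4} = {}"
    proof -
      { fix S assume "S \<subseteq> V" "card S = 4"
        then have "card S \<le> card V" using card_mono[OF finV \<open>S \<subseteq> V\<close>] by simp
        then have False using True \<open>card S = 4\<close> by simp }
      then show ?thesis by auto
    qed
    have "F V E = 0" unfolding F_def e0 by simp
    then show ?thesis using Psi0 True by simp
  next
    case False
    then have n2: "card V \<ge> 2" by simp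
    have Vne: "V \<noteq> {}" using n2 by auto
    have "Min (deg E ` V) \<in> deg E ` V" using finV Vne by (intro Min_in) auto
    then obtain v where v0: "v \<in> V" "Min (deg E ` V) = deg E v" by blast
    then have v: "v \<in> V" "deg E v = Min (deg E ` V)" by auto
    have vmin: "\<And>u. u \<in> V \<Longrightarrow> deg E v \<le> deg E u" using v finV by simp
    obtain w where w: "w \<in> V" "w \<noteq> v"
    proof -
      have "V \<noteq> {v}" using n2 by auto
      then show ?thesis using that v(1) by blast
    qed
    define d where "d = deg E v"
    have d1: "d \<ge> 1" unfolding d_def using deg_pos[OF wf cn v(1) w] .
    have dm: "d \<le> card E" unfolding d_def using deg_le_card[OF finE] .
    show ?thesis
    proof (cases "conn (V - {v}) (del E v)")
      case True
      define V' where "V' = V - {v}"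
      define E' where "E' = del E v"
      have wf': "wfg V' E'" unfolding V'_def E'_def using wfg_del[OF wf] .
      have cV': "card V' = card V - 1" unfolding V'_def using v finV by simp
      have cE': "card E' = card E - d" unfolding E'_def d_def using card_del[OF wf] .
      have IH: "- Psi V' E' \<le> F V' E' \<and> card V' \<le> card E' + 1"
        using less.hyps[of V' E'] cV' n2 wf' True unfolding V'_def E'_def by auto
      have FD: "F V E = F V' E' + (\<Sum>S\<in>Sv V v. dl E S)" unfolding V'_def E'_def using F_delete[OF wf v(1)] .
      define D where "D = (\<Sum>S\<in>Sv V v. dl E S)"
      define K where "K = int (card E) - int (Dmax V E)"
      define K' where "K' = int (card E') - int (Dmax V' E')"
      define ex where "ex = int (card E) - 2 * int (card V) + 4"
      have finV': "finite V'" using wf' unfolding wfg_def by auto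
      have K0: "K \<ge> 0" unfolding K_def using DmE by simp
      have K'0: "K' \<ge> 0" unfolding K'_def using Dmax_le[OF finV' wfg_finE[OF wf']] by simp
      have KK: "K' \<le> K"
      proof -
        have "Dmax V E \<le> Dmax V' E' + d" unfolding V'_def E'_def d_def
          using Dmax_del[OF wf v(1)] d1 w unfolding d_def by blast
        then show ?thesis unfolding K_def K'_def cE' using dm by linarith
      qed
      have Psi_eq: "Psi V E = max 0 ex * K" unfolding Psi_def ex_def K_def ..
      have exE: "int (card E') - 2 * int (card V') + 4 = ex - int d + 2"
        unfolding ex_def cE' cV' using dm n2 by (simp add: of_nat_diff)
      have Psi'_eq: "Psi V' E' = max 0 (ex - int d + 2) * K'"
        unfolding Psi_def K'_def exE ..
      have IHF: "F V' E' \<ge> - (max 0 (ex - int d + 2) * K')" using IH Psi'_eq by simp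
      have nm: "card V \<le> card E + 1" using IH cV' cE' d1 dm by linarith
      have DK: "card {e\<in>E. e \<subseteq> Nb E v} \<le> card E - Dmax V E"
      proof -
        obtain u where "u \<in> V" "deg E u = Dmax V E" using Dmax_attained[OF finV Vne] by blast
        then show ?thesis using eN_le[OF wf, of v u] by simp
      qed
      have Nbd: "card (Nb E v) = d" unfolding d_def using deg_Nb[OF wf] by simp
      have Dgen: "D \<ge> - ((int d - 2) * K)" if "d \<ge> 2"
      proof -
        have "D \<ge> -3 * int (card {S\<in>Sv V v. clique E S})" unfolding D_def by (rule D_clique[OF wf])
        moreover have "3 * card {S\<in>Sv V v. clique E S} \<le> (d - 2) * card {e\<in>E. e \<subseteq> Nb E v}"
          using clique_count[OF wf, of v] Nbd by simp
        moreover have "(d - 2) * card {e\<in>E. e \<subseteq> Nb E v} \<le> (d - 2) * (card E - Dmax V E)"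
          using DK by (intro mult_left_mono) auto
        ultimately have "D \<ge> - int ((d - 2) * (card E - Dmax V E))" by linarith
        moreover have "int ((d - 2) * (card E - Dmax V E)) = (int d - 2) * K"
          unfolding K_def using that DmE by (simp add: of_nat_diff)
        ultimately show ?thesis by simp
      qed
      have "F V E \<ge> - Psi V E"
      proof (cases "d = 1")
        case True
        then obtain a where a: "Nb E v = {a}" using Nbd by (auto simp: card_1_singleton_iff)
        have "D \<ge> int (card E) - int (deg E a)" unfolding D_def by (rule D_leaf[OF wf v(1) a])
        moreover have "deg E a \<le> Dmax V E"
        proof -
          have "a \<in> V" using a Nb_sub[OF wf] by auto
          then show ?thesis using Dmax_ge[OF finV] by blast
        qed
        ultimately have "D \<ge> K" unfolding K_def by linarith
        then have "F V' E' + D \<ge> - (max 0 ex * K)"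
          by (intro arith_leaf[OF _ K'0 KK]) (use IHF True in \<open>simp add: add.commute\<close>)
        then show ?thesis unfolding FD Psi_eq D_def .
      next
        case dn1: False
        then have d2: "d \<ge> 2" using d1 by simp
        show ?thesis
        proof (cases "ex \<ge> int d - 2")
          case True
          have "F V' E' + D \<ge> - (max 0 ex * K)"
            by (rule arith_gen[OF IHF K'0 KK Dgen[OF d2] True]) (use d2 in simp)
          then show ?thesis unfolding FD Psi_eq D_def .
        next
          case exs: False
          have d23: "d = 2 \<or> d = 3"
          proof (rule ccontr)
            assume "\<not> (d = 2 \<or> d = 3)"
            then have d4: "d \<ge> 4" using d2 by simp
            have "card V * d \<le> (\<Sum>u\<in>V. deg E u)"
              using vmin sum_bounded_below[of V d "deg E"] unfolding d_def by simp
            then have hs: "card V * d \<le> 2 * card E" using handshake[OF wf] by simp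
            have "int (card V) * (int d - 4) \<ge> 2 * (int d - 4)"
              using mult_right_mono[of 2 "int (card V)" "int d - 4"] n2 d4 by simp
            moreover have "int (card V * d) \<le> int (2 * card E)" using hs by (simp only: of_nat_le_iff)
            then have "int (card V) * int d \<le> 2 * int (card E)" by simp
            ultimately have "ex \<ge> int d - 2" unfolding ex_def by (simp add: algebra_simps)
            then show False using exs by simp
          qed
          have "D \<ge> 0"
          proof (cases "d = 2")
            case True
            then show ?thesis using Dgen[OF d2] by simp
          next
            case False
            then have d3: "d = 3" using d23 by simp
            have mind: "3 \<le> card (Nb E u)" if "u \<in> V" for u
              using vmin[OF that] deg_Nb[OF wf, of u] d3 unfolding d_def by simp
            have mb: "card E + 4 \<le> 2 * card V" using exs d3 unfolding ex_def by linarith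
            show ?thesis unfolding D_def by (rule D_three[OF wf v(1) _ mind mb]) (use Nbd d3 in simp)
          qed
          moreover have "ex - int d + 2 \<le> 0" using exs by simp
          ultimately have "F V' E' + D \<ge> - (max 0 ex * K)"
            using arith_small[OF IHF _ _ K0] by simp
          then show ?thesis unfolding FD Psi_eq D_def .
        qed
      qed
      then show ?thesis using nm by simp
    next
      case False
      obtain V1 V2 where sp: "V1 \<union> V2 = V" "V1 \<inter> V2 = {v}" "card V1 < card V" "card V2 < card V"
        "wfg V1 {e\<in>E. e \<subseteq> V1}" "wfg V2 {e\<in>E. e \<subseteq> V2}" "E = {e\<in>E. e \<subseteq> V1} \<union> {e\<in>E. e \<subseteq> V2}"
        "conn V1 {e\<in>E. e \<subseteq> V1}" "conn V2 {e\<in>E. e \<subseteq> V2}"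
        by (rule split_cut[OF wf cn v(1) False])
      define E1 where "E1 = {e\<in>E. e \<subseteq> V1}"
      define E2 where "E2 = {e\<in>E. e \<subseteq> V2}"
      have W1: "wfg V1 E1" using sp(5) unfolding E1_def .
      have W2: "wfg V2 E2" using sp(6) unfolding E2_def .
      have EU: "E = E1 \<union> E2" using sp(7) unfolding E1_def E2_def .
      have C1: "conn V1 E1" using sp(8) unfolding E1_def .
      have C2: "conn V2 E2" using sp(9) unfolding E2_def .
      have IH1: "- Psi V1 E1 \<le> F V1 E1 \<and> card V1 \<le> card E1 + 1" using less.hyps[OF sp(3) W1 C1] .
      have IH2: "- Psi V2 E2 \<le> F V2 E2 \<and> card V2 \<le> card E2 + 1" using less.hyps[OF sp(4) W2 C2] .
      have fin1: "finite V1" "finite V2" using W1 W2 unfolding wfg_def by auto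
      have fE12: "finite E1" "finite E2" using wfg_finE[OF W1] wfg_finE[OF W2] by auto
      have VU: "V = V1 \<union> V2" using sp(1) by simp
      have FE: "F V E = F V1 E1 + F V2 E2 + (\<Sum>S\<in>Mx V1 V2. dl E S)"
        unfolding VU EU using os_F[OF sp(2) W1 W2] .
      have X: "(\<Sum>S\<in>Mx V1 V2. dl E S) \<ge> int (card E1 * card E2) - int (deg E1 v * deg E2 v)"
        unfolding EU using os_cross[OF sp(2) W1 W2] .
      have cc1: "card E = card E1 + card E2" unfolding EU by (rule os_card(1)[OF sp(2) W1 W2])
      have cc2: "card V + 1 = card V1 + card V2" unfolding VU by (rule os_card(2)[OF sp(2) W1 W2])
      note cc = cc1 cc2
      have vV1: "v \<in> V1" "v \<in> V2" using sp(2) by blast+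
      have oth1: "\<exists>w\<in>V1. w \<noteq> v"
      proof (rule ccontr)
        assume "\<not> (\<exists>w\<in>V1. w \<noteq> v)"
        then have "V1 \<subseteq> {v}" by blast
        then have "V1 \<subseteq> V2" using vV1 by blast
        then have "V2 = V" using VU by blast
        then show False using sp(4) by simp
      qed
      have oth2: "\<exists>w\<in>V2. w \<noteq> v"
      proof (rule ccontr)
        assume "\<not> (\<exists>w\<in>V2. w \<noteq> v)"
        then have "V2 \<subseteq> {v}" by blast
        then have "V2 \<subseteq> V1" using vV1 by blast
        then have "V1 = V" using VU by blast
        then show False using sp(3) by simp
      qed
      have dd1: "deg E1 v \<ge> 1" using oth1 deg_pos[OF W1 C1 vV1(1)] by blast
      have dd2: "deg E2 v \<ge> 1" using oth2 deg_pos[OF W2 C2 vV1(2)] by blast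
      have dD1: "deg E1 v \<le> Dmax V1 E1" using Dmax_ge[OF fin1(1) vV1(1)] .
      have dD2: "deg E2 v \<le> Dmax V2 E2" using Dmax_ge[OF fin1(2) vV1(2)] .
      have Dm1: "Dmax V1 E1 \<le> card E1" using Dmax_le[OF fin1(1) fE12(1)] .
      have Dm2: "Dmax V2 E2 \<le> card E2" using Dmax_le[OF fin1(2) fE12(2)] .
      have Dsub: "Dmax V E \<le> Dmax V1 E1 + Dmax V2 E2"
      proof -
        obtain u where u: "u \<in> V" "deg E u = Dmax V E" using Dmax_attained[OF finV Vne] by blast
        have "deg E u = deg E1 u + deg E2 u" unfolding EU using os_deg[OF sp(2) W1 W2] .
        moreover have "deg E1 u \<le> Dmax V1 E1"
          by (cases "u \<in> V1") (auto simp: Dmax_ge[OF fin1(1)] deg_outside[OF W1])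
        moreover have "deg E2 u \<le> Dmax V2 E2"
          by (cases "u \<in> V2") (auto simp: Dmax_ge[OF fin1(2)] deg_outside[OF W2])
        ultimately show ?thesis using u by simp
      qed
      have A: "F V1 E1 + F V2 E2 + (\<Sum>S\<in>Mx V1 V2. dl E S) \<ge>
          - (max 0 ((int (card E1) - 2 * int (card V1) + 4) + (int (card E2) - 2 * int (card V2) + 4) - 2)
             * (int (card E) - int (Dmax V E)))"
      proof (rule arith_os)
        show "F V1 E1 \<ge> - (max 0 (int (card E1) - 2 * int (card V1) + 4) * (int (card E1) - int (Dmax V1 E1)))"
          using IH1 unfolding Psi_def by simp
        show "F V2 E2 \<ge> - (max 0 (int (card E2) - 2 * int (card V2) + 4) * (int (card E2) - int (Dmax V2 E2)))"
          using IH2 unfolding Psi_def by simp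
        show "(\<Sum>S\<in>Mx V1 V2. dl E S) \<ge> int (card E1) * int (card E2) - int (deg E1 v) * int (deg E2 v)"
          using X by simp
        show "int (card E) - int (Dmax V E) \<ge> (int (card E1) - int (Dmax V1 E1)) + (int (card E2) - int (Dmax V2 E2))"
          using Dsub cc by simp
        show "int (card E1) + (int (card E1) - 2 * int (card V1) + 4) \<ge> 2" using IH1 by simp
        show "int (card E2) + (int (card E2) - 2 * int (card V2) + 4) \<ge> 2" using IH2 by simp
      qed (use dd1 dd2 dD1 dD2 Dm1 Dm2 in simp_all)
      have B: "(int (card E1) - 2 * int (card V1) + 4) + (int (card E2) - 2 * int (card V2) + 4) - 2
          = int (card E) - 2 * int (card V) + 4" using cc by simp
      have "F V E \<ge> - Psi V E" using A[unfolded B] unfolding FE Psi_def .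
      moreover have "card V \<le> card E + 1" using IH1 IH2 cc by simp
      ultimately show ?thesis by simp
    qed
  qed
qed



lemma prod_monom: "finite A \<Longrightarrow> (\<Prod>i\<in>A. monom (a i) (k i)) = monom (\<Prod>i\<in>A. a i) (\<Sum>i\<in>A. k i)"
  by (induct A rule: finite_induct) (auto simp: mult_monom)

lemma perm_sum_F:
  assumes fin: "finite V" and loop: "\<And>i. wt E i i = 0"
  shows "F V E = (\<Sum>p\<in>{p. p permutes V \<and> card {i. p i \<noteq> i} = 4}. sign p * (\<Prod>i\<in>{i. p i \<noteq> i}. wt E i (p i)))"
proof -
  define P4 where "P4 = {p. p permutes V \<and> card {i. p i \<noteq> i} = 4}"
  define h where "h p = sign p * (\<Prod>i\<in>{i. p i \<noteq> i}. wt E i (p i))" for p :: "nat \<Rightarrow> nat"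
  have finP4: "finite P4" unfolding P4_def using finite_permutations[OF fin] by (rule rev_finite_subset) auto
  have finT: "finite {S. S \<subseteq> V \<and> card S = 4}" using fin by auto
  have img: "(\<lambda>p. {i. p i \<noteq> i}) ` P4 \<subseteq> {S. S \<subseteq> V \<and> card S = 4}"
    unfolding P4_def using permutes_not_in by fastforce
  have inner: "dl E T = (\<Sum>p\<in>{p\<in>P4. {i. p i \<noteq> i} = T}. h p)" if T: "T \<in> {S. S \<subseteq> V \<and> card S = 4}" for T
  proof -
    have finTT: "finite T" using T fin finite_subset by auto
    have sub: "{p\<in>P4. {i. p i \<noteq> i} = T} \<subseteq> {p. p permutes T}"
      unfolding P4_def permutes_def by auto
    have "dl E T = (\<Sum>p\<in>{p\<in>P4. {i. p i \<noteq> i} = T}. sign p * (\<Prod>i\<in>T. wt E i (p i)))"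
      unfolding dl_def
    proof (rule sum.mono_neutral_right[OF _ sub])
      show "finite {p. p permutes T}" using finite_permutations[OF finTT] .
      show "\<forall>p\<in>{p. p permutes T} - {p \<in> P4. {i. p i \<noteq> i} = T}. sign p * (\<Prod>i\<in>T. wt E i (p i)) = 0"
      proof
        fix p assume p: "p \<in> {p. p permutes T} - {p \<in> P4. {i. p i \<noteq> i} = T}"
        then have pT: "p permutes T" by auto
        have mvT: "{i. p i \<noteq> i} \<subseteq> T" using pT permutes_not_in by fastforce
        have "\<exists>i\<in>T. p i = i"
        proof (rule ccontr)
          assume "\<not> (\<exists>i\<in>T. p i = i)"
          then have "{i. p i \<noteq> i} = T" using mvT by auto
          moreover have "p permutes V" using pT T permutes_subset by blast
          ultimately have "p \<in> {p \<in> P4. {i. p i \<noteq> i} = T}" using T unfolding P4_def by auto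
          then show False using p by auto
        qed
        then obtain i where "i \<in> T" "p i = i" by auto
        then have "(\<Prod>i\<in>T. wt E i (p i)) = 0" using finTT loop by (metis prod_zero_iff)
        then show "sign p * (\<Prod>i\<in>T. wt E i (p i)) = 0" by simp
      qed
    qed
    also have "\<dots> = (\<Sum>p\<in>{p\<in>P4. {i. p i \<noteq> i} = T}. h p)"
      unfolding h_def by (intro sum.cong refl) auto
    finally show ?thesis .
  qed
  have "F V E = (\<Sum>T\<in>{S. S \<subseteq> V \<and> card S = 4}. \<Sum>p\<in>{p\<in>P4. {i. p i \<noteq> i} = T}. h p)"
    unfolding F_def using inner by (intro sum.cong refl) auto
  also have "\<dots> = sum h P4" by (rule sum.group[OF finP4 finT img])
  finally show ?thesis unfolding P4_def h_def .
qed

lemma a4_eq_F: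
  assumes sg: "simple_graph n E" and n4: "4 \<le> n"
  shows "a4 n E = F {0..<n} E"
proof -
  define A where "A = adjacency_matrix n E"
  have A: "A \<in> carrier_mat n n" unfolding A_def adjacency_matrix_def by auto
  have loop: "\<And>i. wt E i i = 0" using sg unfolding simple_graph_def wt_def by force
  have Aij: "A $$ (i,j) = wt E i j" if "i < n" "j < n" for i j
    using that unfolding A_def adjacency_matrix_def adjacent_def wt_def by simp
  define cm where "cm i j = monom (if i = j then 1 else - wt E i j) (if i = j then 1 else 0)" for i j
  have C: "char_poly_matrix A \<in> carrier_mat n n" using A by simp
  have Cij: "char_poly_matrix A $$ (i,j) = cm i j" if "i < n" "j < n" for i j
    using that A Aij[OF that] loop unfolding char_poly_matrix_def cm_def
    by (auto simp: monom_0 monom_Suc)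
  have tmx: "coeff (signof p * (\<Prod>i = 0..<n. char_poly_matrix A $$ (i, p i))) (n - 4)
      = (if card {i. p i \<noteq> i} = 4 then sign p * (\<Prod>i\<in>{i. p i \<noteq> i}. wt E i (p i)) else 0)"
    if p: "p permutes {0..<n}" for p
  proof -
    have pin: "i < n \<Longrightarrow> p i < n" for i using permutes_in_image[OF p] by auto
    have mv: "{i. p i \<noteq> i} \<subseteq> {0..<n}" using p permutes_not_in by fastforce
    have "(\<Prod>i = 0..<n. char_poly_matrix A $$ (i, p i)) = (\<Prod>i = 0..<n. cm i (p i))"
      using Cij pin by (intro prod.cong) auto
    also have "\<dots> = monom (\<Prod>i = 0..<n. if i = p i then 1 else - wt E i (p i)) (\<Sum>i = 0..<n. if i = p i then 1 else 0)"
      unfolding cm_def by (rule prod_monom) simp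
    also have "(\<Sum>i = 0..<n. if i = p i then 1 else 0) = card {i\<in>{0..<n}. p i = i}"
      by (subst card_filter_sum) (auto intro: sum.cong)
    also have "(\<Prod>i = 0..<n. if i = p i then 1 else - wt E i (p i)) = (\<Prod>i\<in>{i. p i \<noteq> i}. - wt E i (p i))"
    proof -
      have "(\<Prod>i = 0..<n. if i = p i then 1 else - wt E i (p i)) = (\<Prod>i = 0..<n. if p i \<noteq> i then - wt E i (p i) else 1)"
        by (intro prod.cong) auto
      also have "\<dots> = (\<Prod>i\<in>{i\<in>{0..<n}. p i \<noteq> i}. - wt E i (p i))"
        by (rule prod.inter_filter[symmetric]) simp
      also have "{i\<in>{0..<n}. p i \<noteq> i} = {i. p i \<noteq> i}" using mv by auto
      finally show ?thesis .
    qed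
    finally have pr: "(\<Prod>i = 0..<n. char_poly_matrix A $$ (i, p i)) = monom (\<Prod>i\<in>{i. p i \<noteq> i}. - wt E i (p i)) (card {i\<in>{0..<n}. p i = i})" .
    have cardsplit: "card {i\<in>{0..<n}. p i = i} + card {i. p i \<noteq> i} = n"
    proof -
      have "{0..<n} = {i\<in>{0..<n}. p i = i} \<union> {i. p i \<noteq> i}" using mv by auto
      moreover have "{i\<in>{0..<n}. p i = i} \<inter> {i. p i \<noteq> i} = {}" by auto
      moreover have "finite {i. p i \<noteq> i}" using mv finite_subset by blast
      ultimately show ?thesis by (metis card_Un_disjoint card_atLeastLessThan diff_zero finite_Un finite_atLeastLessThan)
    qed
    have "signof p * (\<Prod>i = 0..<n. char_poly_matrix A $$ (i, p i)) = monom (sign p * (\<Prod>i\<in>{i. p i \<noteq> i}. - wt E i (p i))) (card {i\<in>{0..<n}. p i = i})"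
    proof -
      have "(signof p :: int poly) = monom (sign p) 0" by (simp add: of_int_poly monom_0)
      then show ?thesis unfolding pr by (simp add: mult_monom)
    qed
    then have "coeff (signof p * (\<Prod>i = 0..<n. char_poly_matrix A $$ (i, p i))) (n - 4)
       = (if card {i\<in>{0..<n}. p i = i} = n - 4 then sign p * (\<Prod>i\<in>{i. p i \<noteq> i}. - wt E i (p i)) else 0)"
      by simp
    also have "\<dots> = (if card {i. p i \<noteq> i} = 4 then sign p * (\<Prod>i\<in>{i. p i \<noteq> i}. wt E i (p i)) else 0)"
      using cardsplit n4 by (auto simp: prod_uminus)
    finally show ?thesis .
  qed
  have "a4 n E = coeff (det (char_poly_matrix A)) (n - 4)"
    unfolding a4_def char_poly_def A_def ..
  also have "\<dots> = (\<Sum>p\<in>{p. p permutes {0..<n}}. coeff (signof p * (\<Prod>i = 0..<n. char_poly_matrix A $$ (i, p i))) (n - 4))"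
    unfolding det_def'[OF C] coeff_sum ..
  also have "\<dots> = (\<Sum>p\<in>{p. p permutes {0..<n}}. if card {i. p i \<noteq> i} = 4 then sign p * (\<Prod>i\<in>{i. p i \<noteq> i}. wt E i (p i)) else 0)"
    using tmx by (intro sum.cong refl) auto
  also have "\<dots> = (\<Sum>p\<in>{p. p permutes {0..<n} \<and> card {i. p i \<noteq> i} = 4}. sign p * (\<Prod>i\<in>{i. p i \<noteq> i}. wt E i (p i)))"
    using finite_permutations[of "{0..<n}"] by (simp add: sum.inter_filter[symmetric] conj_commute)
  also have "\<dots> = F {0..<n} E"
    using perm_sum_F[of "{0..<n}" E] loop by simp
  finally show ?thesis .
qed


theorem theorem4p4:
  fixes n m :: nat and E :: "nat set set"
  assumes "n \<ge> 6"
    and "n - 1 \<le> m" and "m \<le> 2 * n - 4"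
    and "simple_graph n E"
    and "connected_graph n E"
    and "card E = m"
  shows "a4 n E \<ge> 0"
proof -
  have wf: "wfg {0..<n} E" using assms(4) unfolding simple_graph_def wfg_def by auto
  have cn: "conn {0..<n} E" using assms(5) unfolding connected_graph_def conn_def .
  have M: "- Psi {0..<n} E \<le> F {0..<n} E" using main[OF wf cn] by simp
  have "int (card E) - 2 * int (card {0..<n}) + 4 \<le> 0" using assms(1,3,6) by simp
  then have "Psi {0..<n} E = 0" unfolding Psi_def by simp
  moreover have "a4 n E = F {0..<n} E" using a4_eq_F[OF assms(4)] assms(1) by simp
  ultimately show ?thesis using M by simp
qed

end
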